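(* Let $\Omega\subset\subset\mathbb{C}^n$ be a bounded domain satisfying the $(C,\alpha,r)$-cusp condition, where $C>0$, $0<\alpha<1$, $r>0$. Put \[ A:=\frac{\pi C^{1/\alpha}}{2(1/\alpha-1)}. \] Then for every negative plurisubharmonic function $\rho$ on $\Omega$ there exist constants $c>0$ and $\delta_0>0$ such that \[ \rho(z)\le -c\,\exp\!\left(-\frac{A}{\delta_\Omega(z)^{1/\alpha-1}}\right)\quad\text{for all } z\in\Omega \text{ with } \delta_\Omega(z)<\delta_0, \] where $\delta_\Omega(z)$ denotes the Euclidean distance from $z$ to $\partial\Omega$.
   Context: For a unit vector $v\in\mathbb{C}^n$, let $\langle z,w\rangle=\sum_k z_k\overline{w_k}$ and let $\pi_v$ be the orthogonal projection of $\mathbb{C}^n=\mathbb{R}^{2n}$ onto the real hyperplane $\{w:\mathrm{Re}\langle w,v\rangle=0\}$. For $p\in\mathbb{C}^n$, the $(C,\alpha)$-cusp with axis $v$ and vertex $p$ is $\Gamma(p,v,C,\alpha):=\{z\in\mathbb{C}^n:\ \mathrm{Re}\langle z-p,v\rangle>C|\pi_v(z-p)|^\alpha\}$; its axis is the ray $\{p+tv: t>0\}$. A bounded domain $\Omega\subset\mathbb{C}^n$ satisfies the $(C,\alpha,r)$-cusp condition if every $z\in\Omega$ sufficiently close to $\partial\Omega$ lies on the axis of some cusp $\Gamma(p,v,C,\alpha)$ with (1) $p\in\partial\Omega$; (2) $\Gamma(p,v,C,\alpha)\cap B_r(p)\subset\Omega$, where $B_r(p)$ is the open ball of center $p$ and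 radius $r$; (3) $|z-p|<r/2$. *)

theory Defs
  imports "HOL-Analysis.Analysis"
begin

text \<open>Points of C^n are modelled as vectors of type complex^'n ('n finite, n = CARD('n) >= 1);
  the norm on complex^'n is the Euclidean norm of R^{2n}.\<close>

definition cinner :: "complex^'n \<Rightarrow> complex^'n \<Rightarrow> complex" where
  "cinner z w = (\<Sum>k\<in>UNIV. z $ k * cnj (w $ k))"

text \<open>Orthogonal projection of R^{2n} onto the real hyperplane {w. Re <w,v> = 0} (v a unit vector).\<close>
definition proj_hyp :: "complex^'n \<Rightarrow> complex^'n \<Rightarrow> complex^'n" where
  "proj_hyp v w = w - (Re (cinner w v)) *\<^sub>R v"

definition cusp :: "complex^'n \<Rightarrow> complex^'n \<Rightarrow> real \<Rightarrow> real \<Rightarrow> (complex^'n) set" where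
  "cusp p v C \<alpha> = {z. Re (cinner (z - p) v) > C * norm (proj_hyp v (z - p)) powr \<alpha>}"

definition cusp_condition :: "(complex^'n) set \<Rightarrow> real \<Rightarrow> real \<Rightarrow> real \<Rightarrow> bool" where
  "cusp_condition \<Omega> C \<alpha> r \<longleftrightarrow>
     (\<exists>\<epsilon>>0. \<forall>z\<in>\<Omega>. infdist z (frontier \<Omega>) < \<epsilon> \<longrightarrow>
        (\<exists>p v. p \<in> frontier \<Omega> \<and> norm v = 1 \<and> (\<exists>t>0. z = p + t *\<^sub>R v) \<and>
               cusp p v C \<alpha> \<inter> ball p r \<subseteq> \<Omega> \<and> norm (z - p) < r / 2))"

definition usc_on :: "(complex^'n) set \<Rightarrow> (complex^'n \<Rightarrow> real) \<Rightarrow> bool" where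
  "usc_on \<Omega> u \<longleftrightarrow> (\<forall>t. openin (top_of_set \<Omega>) {z\<in>\<Omega>. u z < t})"

text \<open>Plurisubharmonic (Klimek's definition): upper semicontinuous, and the sub-mean-value
  inequality holds on every closed complex disc {a + \<zeta> b : |\<zeta>| \<le> 1} contained in \<Omega>.
  (For real-valued u the integral must be finite, i.e. the function integrable.)\<close>
definition psh :: "(complex^'n) set \<Rightarrow> (complex^'n \<Rightarrow> real) \<Rightarrow> bool" where
  "psh \<Omega> u \<longleftrightarrow> usc_on \<Omega> u \<and>
     (\<forall>a\<in>\<Omega>. \<forall>b. (\<forall>\<zeta>::complex. norm \<zeta> \<le> 1 \<longrightarrow> a + \<zeta> *s b \<in> \<Omega>) \<longrightarrow>
        set_integrable lborel {0..2*pi} (\<lambda>\<theta>. u (a + cis \<theta> *s b)) \<and>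
        u a \<le> (1 / (2*pi)) * (LINT \<theta>:{0..2*pi}|lborel. u (a + cis \<theta> *s b)))"

end

theory Submission
  imports Defs "HOL-Complex_Analysis.Complex_Analysis"
begin

lemma holo_mean:
  fixes h :: "complex \<Rightarrow> complex" and s :: real
  assumes "h holomorphic_on S" "open S" "cball a s \<subseteq> S" "s > 0"
  shows "((\<lambda>t. h (a + of_real s * cis t)) has_integral (2 * of_real pi * h a)) {0..2*pi}"
proof -
  have c: "continuous_on (cball a s) h"
    using assms holomorphic_on_imp_continuous_on holomorphic_on_subset by blast
  have hb: "h holomorphic_on ball a s"
    using assms(1,3) ball_subset_cball holomorphic_on_subset by blast
  have "((\<lambda>u. h u/(u-a)) has_contour_integral (2 * of_real pi * \<i> * h a)) (circlepath a s)"
    using Cauchy_integral_circlepath[OF c hb] assms(4) by simp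
  hence "((\<lambda>t. h (a + s * cis t)/(a + s * cis t - a) * s * \<i> * cis t) has_integral (2 * of_real pi * \<i> * h a)) {0..2*pi}"
    unfolding circlepath_def by (subst (asm) has_contour_integral_part_circlepath_iff) auto
  hence "((\<lambda>t. \<i> * h (a + s * cis t)) has_integral (2 * of_real pi * \<i> * h a)) {0..2*pi}"
    apply (rule has_integral_eq[rotated]) using assms(4) by (simp add: field_simps)
  hence X: "((\<lambda>t. (-\<i>) * (\<i> * h (a + s * cis t))) has_integral (-\<i>) * (2 * of_real pi * \<i> * h a)) {0..2*pi}"
    by (rule has_integral_mult_right)
  have E2: "\<And>w. (-\<i>) * (\<i> * w) = w" by (simp add: mult.assoc[symmetric])
  have E1: "-\<i> * (2 * of_real pi * \<i> * h a) = 2 * of_real pi * h a"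
    by (simp add: complex_eq_iff)
  show ?thesis using X unfolding E1 E2 .
qed

lemma circle_int_le_const:
  fixes g :: "real \<Rightarrow> real"
  assumes "set_integrable lborel {0..2*pi} g" "\<And>t. t \<in> {0..2*pi} \<Longrightarrow> g t \<le> M"
  shows "(1/(2*pi)) * (LINT t:{0..2*pi}|lborel. g t) \<le> M"
proof -
  have ci: "set_integrable lborel {0..2*pi} (\<lambda>_. M)"
    by (rule borel_integrable_atLeastAtMost') simp
  have "(LINT t:{0..2*pi}|lborel. g t) \<le> (LINT t:{0..2*pi}|lborel. M)"
    by (rule set_integral_mono[OF assms(1) ci assms(2)])
  also have "\<dots> = 2*pi*M"
    by (subst set_integral_const) (auto simp: measure_lborel_Icc)
  finally show ?thesis by (simp add: field_simps)
qed

lemma maxprin: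
  fixes f u :: "complex \<Rightarrow> real" and D :: "complex set"
  assumes bD: "bounded D" and oD: "open D"
    and usc: "\<And>w e. w \<in> D \<Longrightarrow> e > 0 \<Longrightarrow> \<exists>d>0. \<forall>z\<in>D. cmod (z - w) < d \<longrightarrow> f z < f w + e"
    and fint: "\<And>a s. s > 0 \<Longrightarrow> cball a s \<subseteq> D \<Longrightarrow>
        set_integrable lborel {0..2*pi} (\<lambda>\<theta>. f (a + of_real s * cis \<theta>)) \<and>
        f a \<le> (1/(2*pi)) * (LINT \<theta>:{0..2*pi}|lborel. f (a + of_real s * cis \<theta>))"
    and ucont: "continuous_on D u"
    and umean: "\<And>a s. s > 0 \<Longrightarrow> cball a s \<subseteq> D \<Longrightarrow>
        u a < (1/(2*pi)) * (LINT \<theta>:{0..2*pi}|lborel. u (a + of_real s * cis \<theta>))"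
    and ubd: "\<And>z. z \<in> D \<Longrightarrow> f z + u z \<le> K"
    and bdry: "\<And>w e. w \<in> closure D \<Longrightarrow> w \<notin> D \<Longrightarrow> e > 0 \<Longrightarrow>
        \<exists>d>0. \<forall>z\<in>D. cmod (z - w) < d \<longrightarrow> f z + u z < e"
    and z0: "z0 \<in> D"
  shows "f z0 + u z0 \<le> 0"
proof (rule ccontr)
  define g where "g z = f z + u z" for z
  assume "\<not> f z0 + u z0 \<le> 0"
  hence gz0: "g z0 > 0" by (simp add: g_def)
  define M where "M = Sup (g ` D)"
  have bdd: "bdd_above (g ` D)" unfolding g_def by (rule bdd_aboveI[where M=K]) (use ubd in auto)
  have gleM: "g z \<le> M" if "z \<in> D" for z
    unfolding M_def using bdd that by (simp add: cSup_upper)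
  have Mpos: "M > 0" using gleM[OF z0] gz0 by linarith
  have "\<forall>n. \<exists>z. z \<in> D \<and> g z > M - 1 / Suc n"
  proof
    fix n :: nat
    have "M - 1 / Suc n < Sup (g ` D)" unfolding M_def by simp
    then obtain y where "y \<in> g ` D" "M - 1 / Suc n < y"
      using less_cSup_iff[OF _ bdd] z0 by auto
    thus "\<exists>z. z \<in> D \<and> g z > M - 1 / Suc n" by auto
  qed
  then obtain zs where zs: "\<And>n. zs n \<in> D" "\<And>n. g (zs n) > M - 1 / Suc n" by metis
  have "seq_compact (closure D)"
    by (rule compact_imp_seq_compact) (use bD compact_closure in auto)
  moreover have "\<forall>n. zs n \<in> closure D" using zs(1) closure_subset by blast
  ultimately obtain w \<sigma> where w: "w \<in> closure D" "strict_mono \<sigma>" "(zs \<circ> \<sigma>) \<longlonglongrightarrow> w"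
    by (rule seq_compactE)
  have near: "\<exists>n. cmod (zs (\<sigma> n) - w) < d \<and> g (zs (\<sigma> n)) > M - e" if "d > 0" "e > 0" for d e
  proof -
    have ev1: "eventually (\<lambda>n. cmod (zs (\<sigma> n) - w) < d) sequentially"
      using w(3) \<open>d > 0\<close> unfolding tendsto_iff dist_norm by auto
    obtain N :: nat where N: "1 / Suc N < e"
      using reals_Archimedean[OF \<open>e > 0\<close>] by (metis inverse_eq_divide of_nat_Suc)
    have ev2: "eventually (\<lambda>n. g (zs (\<sigma> n)) > M - e) sequentially"
      unfolding eventually_sequentially
    proof (intro exI allI impI)
      fix n assume "N \<le> n"
      hence "N \<le> \<sigma> n" using seq_suble[OF w(2), of n] by linarith
      hence "1 / real (Suc (\<sigma> n)) \<le> 1 / Suc N" by (simp add: frac_le)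
      thus "g (zs (\<sigma> n)) > M - e" using zs(2)[of "\<sigma> n"] N by linarith
    qed
    from eventually_happens[OF eventually_conj[OF ev1 ev2]] show ?thesis by auto
  qed
  show False
  proof (cases "w \<in> D")
    case True
    have gw: "g w \<ge> M"
    proof (rule ccontr)
      assume "\<not> g w \<ge> M"
      define e where "e = (M - g w) / 4"
      have e: "e > 0" using \<open>\<not> g w \<ge> M\<close> by (simp add: e_def)
      obtain d1 where d1: "d1 > 0" "\<forall>z\<in>D. cmod (z - w) < d1 \<longrightarrow> f z < f w + e"
        using usc[OF True e] by blast
      have "isCont u w" using ucont True oD continuous_on_eq_continuous_at by blast
      then obtain d2 where d2: "d2 > 0" "\<forall>z. dist z w < d2 \<longrightarrow> dist (u z) (u w) < e"
        using e unfolding continuous_at_eps_delta by blast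
      obtain d3 where d3: "d3 > 0" "ball w d3 \<subseteq> D" using oD True open_contains_ball by blast
      obtain n where n: "cmod (zs (\<sigma> n) - w) < min d1 (min d2 d3)" "g (zs (\<sigma> n)) > M - e"
        using near[of "min d1 (min d2 d3)" e] d1 d2 d3 e by auto
      have "zs (\<sigma> n) \<in> D" using zs(1) by auto
      hence "f (zs (\<sigma> n)) < f w + e" using d1 n by auto
      moreover have "u (zs (\<sigma> n)) < u w + e" using d2(2) n by (auto simp: dist_norm)
      ultimately have "g (zs (\<sigma> n)) < g w + 2*e" by (simp add: g_def)
      thus False using n(2) \<open>\<not> g w \<ge> M\<close> unfolding e_def by (simp add: field_simps)
    qed
    obtain s where s: "s > 0" "cball w s \<subseteq> D" using oD True open_contains_cball by blast
    have circ: "w + of_real s * cis t \<in> D" for t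
      using s by (intro subsetD[OF s(2)]) (simp add: dist_norm norm_mult)
    have fi: "set_integrable lborel {0..2*pi} (\<lambda>\<theta>. f (w + of_real s * cis \<theta>))"
      and fm: "f w \<le> (1/(2*pi)) * (LINT \<theta>:{0..2*pi}|lborel. f (w + of_real s * cis \<theta>))"
      using fint[OF s] by auto
    have ui: "set_integrable lborel {0..2*pi} (\<lambda>\<theta>. u (w + of_real s * cis \<theta>))"
      apply (rule borel_integrable_atLeastAtMost')
      apply (rule continuous_on_compose2[OF ucont])
      using circ by (auto intro!: continuous_intros)
    have um: "u w < (1/(2*pi)) * (LINT \<theta>:{0..2*pi}|lborel. u (w + of_real s * cis \<theta>))"
      using umean[OF s] .
    have gi: "set_integrable lborel {0..2*pi} (\<lambda>\<theta>. g (w + of_real s * cis \<theta>))"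
      unfolding g_def using fi ui by simp
    have "(LINT \<theta>:{0..2*pi}|lborel. g (w + of_real s * cis \<theta>)) =
          (LINT \<theta>:{0..2*pi}|lborel. f (w + of_real s * cis \<theta>)) + (LINT \<theta>:{0..2*pi}|lborel. u (w + of_real s * cis \<theta>))"
      unfolding g_def using set_integral_add(2)[OF fi ui] .
    hence "g w < (1/(2*pi)) * (LINT \<theta>:{0..2*pi}|lborel. g (w + of_real s * cis \<theta>))"
      using fm um unfolding g_def by (simp add: distrib_left)
    also have "\<dots> \<le> M" by (rule circle_int_le_const[OF gi]) (use gleM circ in auto)
    finally show False using gw by simp
  next
    case False
    obtain d where d: "d > 0" "\<forall>z\<in>D. cmod (z - w) < d \<longrightarrow> f z + u z < M/2"
      using bdry[OF w(1) False, of "M/2"] Mpos by auto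
    obtain n where n: "cmod (zs (\<sigma> n) - w) < d" "g (zs (\<sigma> n)) > M - M/2"
      using near[OF d(1), of "M/2"] Mpos by auto
    show False using d(2) n zs(1)[of "\<sigma> n"] by (auto simp: g_def)
  qed
qed

lemma re_mean:
  fixes H :: "complex \<Rightarrow> complex" and s :: real
  assumes "H holomorphic_on S" "open S" "cball a s \<subseteq> S" "s > 0"
  shows "set_integrable lborel {0..2*pi} (\<lambda>t. Re (H (a + of_real s * cis t)))"
    "(LINT t:{0..2*pi}|lborel. Re (H (a + of_real s * cis t))) = 2*pi*Re (H a)"
proof -
  have cH: "continuous_on S H" using assms(1) holomorphic_on_imp_continuous_on by blast
  have "continuous_on {0..2*pi} (\<lambda>t. Re (H (a + of_real s * cis t)))"
    apply (intro continuous_intros)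
    apply (rule continuous_on_compose2[OF cH])
    using assms(3,4) by (auto intro!: continuous_intros simp: dist_norm norm_mult subset_iff)
  thus si: "set_integrable lborel {0..2*pi} (\<lambda>t. Re (H (a + of_real s * cis t)))"
    by (rule borel_integrable_atLeastAtMost')
  have "((\<lambda>t. Re (H (a + of_real s * cis t))) has_integral Re (2 * of_real pi * H a)) {0..2*pi}"
    by (rule has_integral_Re[OF holo_mean[OF assms]])
  hence "integral {0..2*pi} (\<lambda>t. Re (H (a + of_real s * cis t))) = 2*pi*Re (H a)"
    by (simp add: integral_unique)
  thus "(LINT t:{0..2*pi}|lborel. Re (H (a + of_real s * cis t))) = 2*pi*Re (H a)"
    using set_borel_integral_eq_integral(2)[OF si] by simp
qed

lemma cos_ge_quad: "cos (x::real) \<ge> 1 - x^2/2"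
proof -
  have "cos x = 1 - 2 * sin (x/2)^2"
    using cos_double_sin[of "x/2"] by simp
  moreover have "sin (x/2)^2 \<le> (x/2)^2"
    using abs_sin_x_le_abs_x[of "x/2"] by (metis abs_le_square_iff)
  ultimately show ?thesis by (simp add: power_divide)
qed

lemma sin_ge_cubic:
  assumes "(x::real) \<ge> 0" shows "sin x \<ge> x - x^3/6"
proof -
  let ?h = "\<lambda>t::real. sin t - t + t^3/6"
  have "?h 0 \<le> ?h x"
  proof (rule DERIV_nonneg_imp_nondecreasing[OF assms])
    fix t :: real assume "0 \<le> t" "t \<le> x"
    show "\<exists>y. DERIV ?h t :> y \<and> y \<ge> 0"
      apply (rule exI[of _ "cos t - 1 + t^2/2"])
      apply (rule conjI)
       apply (auto intro!: derivative_eq_intros simp: power2_eq_square)[1]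
      using cos_ge_quad[of t] by simp
  qed
  thus ?thesis by simp
qed

lemma cos_nonpos_band:
  assumes "pi/2 \<le> (x::real)" "x \<le> 3*pi/2" shows "cos x \<le> 0"
proof -
  have "cos x = - sin (x - pi/2)" by (simp add: sin_diff)
  moreover have "sin (x - pi/2) \<ge> 0" using assms by (intro sin_ge_zero) auto
  ultimately show ?thesis by simp
qed

lemma powr_bernoulli_neg:
  assumes "(t::real) \<ge> 0" "g \<ge> 0" shows "(1 + t) powr (-g) \<ge> 1 - g * t"
proof -
  have "(1+t) powr (-g) = exp (-g * ln (1+t))" using assms by (simp add: powr_def)
  also have "\<dots> \<ge> 1 + (-g * ln (1+t))" by (rule exp_ge_add_one_self)
  finally have "(1+t) powr (-g) \<ge> 1 - g * ln (1+t)" by simp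
  moreover have "ln (1+t) \<le> t" using assms by (intro ln_add_one_self_le_self) auto
  ultimately show ?thesis using assms
    by (smt (verit, best) mult_left_mono)
qed


lemma cpowr_polar:
  fixes z :: complex assumes "z \<noteq> 0"
  shows "z powr (of_real e) = of_real (cmod z powr e) * cis (e * Arg z)"
proof -
  have "z powr (of_real e) = exp (of_real e * Ln z)" using assms by (simp add: powr_def)
  also have "\<dots> = exp (of_real (e * ln (cmod z)) + \<i> * of_real (e * Arg z))"
    using assms by (simp add: Ln_Arg algebra_simps)
  also have "\<dots> = of_real (exp (e * ln (cmod z))) * cis (e * Arg z)"
    by (simp add: exp_add cis_conv_exp exp_of_real[symmetric] del: of_real_mult)
  also have "exp (e * ln (cmod z)) = cmod z powr e" using assms by (simp add: powr_def)
  finally show ?thesis .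
qed

lemma u_polar:
  fixes z :: complex and A B b :: real assumes "z \<noteq> 0"
  shows "Re (exp (- of_real A * z powr of_real (-b) + of_real B * z powr of_real b)) =
     exp (cos (b * Arg z) * (B * cmod z powr b - A * cmod z powr (-b))) *
     cos (sin (b * Arg z) * (A * cmod z powr (-b) + B * cmod z powr b))"
proof -
  let ?w = "- of_real A * z powr of_real (-b) + of_real B * z powr of_real b"
  have w: "?w = - of_real A * (of_real (cmod z powr (-b)) * cis (-b * Arg z)) + of_real B * (of_real (cmod z powr b) * cis (b * Arg z))"
    using assms by (simp add: cpowr_polar del: of_real_minus)
  have R: "Re ?w = cos (b * Arg z) * (B * cmod z powr b - A * cmod z powr (-b))"
    unfolding w by (simp add: algebra_simps)
  have I: "Im ?w = sin (b * Arg z) * (A * cmod z powr (-b) + B * cmod z powr b)"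
    unfolding w by (simp add: algebra_simps)
  have e: "Re (exp ?w) = exp (Re ?w) * cos (Im ?w)" by (subst exp_eq_polar) simp
  show ?thesis by (simp only: e R I)
qed

lemma rpow_decomp:
  assumes "(x::real) > 0"
  shows "sqrt (x^2 + y^2) powr p = x powr p * (1 + (y/x)^2) powr (p/2)"
proof -
  have "x^2 + y^2 = x^2 * (1 + (y/x)^2)" using assms by (simp add: field_simps)
  hence "sqrt (x^2 + y^2) = x * sqrt (1 + (y/x)^2)" using assms by (simp add: real_sqrt_mult)
  hence "sqrt (x^2 + y^2) powr p = x powr p * sqrt (1 + (y/x)^2) powr p"
    using assms by (simp add: powr_mult)
  also have "sqrt (1 + (y/x)^2) powr p = (1 + (y/x)^2) powr (p/2)"
    by (simp add: powr_half_sqrt[symmetric] powr_powr)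
  finally show ?thesis .
qed

lemma prod3_ge:
  fixes a b c :: real
  assumes "0 \<le> a" "a \<le> 1" "0 \<le> b" "b \<le> 1" "0 \<le> c" "c \<le> 1"
  shows "(1-a)*(1-b)*(1-c) \<ge> 1 - a - b - c"
proof -
  have "(1-a)*(1-b) \<ge> 1 - a - b" using assms by (simp add: algebra_simps mult_nonneg_nonneg)
  have "(1-a)*(1-b)*(1-c) = (1-a)*(1-b) - (1-a)*(1-b)*c" by (simp add: algebra_simps)
  moreover have "(1-a)*(1-b)*c \<le> c" using assms by (simp add: mult_le_one mult_left_le_one_le)
  ultimately show ?thesis using \<open>(1-a)*(1-b) \<ge> 1 - a - b\<close> by linarith
qed


lemma band:
  fixes \<alpha> C x y :: real
  defines "\<beta> \<equiv> 1/\<alpha> - 1"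
  defines "A \<equiv> pi * C powr (1/\<alpha>) / (2*\<beta>)"
  defines "K \<equiv> 1 + 1/(2*\<alpha>) + \<beta>^2/6"
  defines "B \<equiv> 3*pi*K/(\<beta> * C powr (1/\<alpha>))"
  defines "sg \<equiv> (x/C) powr (1/\<alpha>) / x"
  defines "r \<equiv> sqrt (x^2+y^2)"
  defines "\<phi> \<equiv> arctan (y/x)"
  assumes a0: "0<\<alpha>" and a1: "\<alpha><1" and C0: "C>0" and x0: "x>0" and sb1: "sg \<le> 1/2" and sb2: "\<beta>* sg \<le> 1"
    and sb3: "sg^2/(2*\<alpha>) \<le> 1" and Bx: "B*(2*x) powr \<beta> \<le> pi"
    and y1: "(1 - sg^2)*(x * sg) \<le> y" and y2: "y \<le> x * sg"
  shows "pi/2 \<le> sin(\<beta>*\<phi>)*(A*r powr (-\<beta>) + B*r powr \<beta>) \<and> sin(\<beta>*\<phi>)*(A*r powr (-\<beta>) + B*r powr \<beta>) \<le> 3*pi/2"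
proof -
  define s where "s = y/x"
  define Ca where "Ca = C powr (1/\<alpha>)"
  have b0: "\<beta> > 0" using a0 a1 by (simp add: \<beta>_def field_simps)
  have Ca0: "Ca > 0" using C0 by (simp add: Ca_def)
  have sbX: "sg = x powr \<beta> / Ca"
  proof -
    have "(x/C) powr (1/\<alpha>) = x powr (1/\<alpha>) / Ca" using x0 C0 by (simp add: powr_divide Ca_def)
    moreover have "x powr (1/\<alpha>) / x = x powr \<beta>" using x0 by (simp add: \<beta>_def powr_diff)
    hence "x powr (1/\<alpha>) = x powr \<beta> * x" using x0 by (simp add: field_simps)
    ultimately show ?thesis unfolding sg_def by (simp add: field_simps)
  qed
  have sb0: "sg > 0" using sbX x0 Ca0 by simp
  have xm: "x powr (-\<beta>) * x powr \<beta> = 1" using x0 by (simp add: powr_minus field_simps)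
  have key: "A * \<beta> * x powr (-\<beta>) * sg = pi/2"
  proof -
    have "A * \<beta> = pi * Ca / 2" using b0 by (simp add: A_def Ca_def field_simps)
    hence "A * \<beta> * x powr (-\<beta>) * sg = pi * Ca / 2 * (x powr (-\<beta>) * x powr \<beta>) / Ca"
      by (simp add: sbX field_simps)
    thus ?thesis using xm Ca0 by simp
  qed
  have BCa: "B * \<beta> * Ca = 3*pi*K" using b0 Ca0 by (simp add: B_def Ca_def)
  have K0: "K \<ge> 0" using a0 by (simp add: K_def)
  have s_le: "s \<le> sg" using y2 x0 by (simp add: s_def field_simps)
  have "sg^2 \<le> (1/2)^2" by (rule power_mono) (use sb1 sb0 in auto)
  hence sbsq: "sg^2 \<le> 1/4" by (simp add: power_divide)
  have s_ge: "s \<ge> (1 - sg^2) * sg" using y1 x0 by (simp add: s_def field_simps)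
  have s_ge2: "s \<ge> sg/2"
  proof -
    have "(1 - sg^2) * sg \<ge> (1/2) * sg" using sbsq sb0 by (intro mult_right_mono) auto
    thus ?thesis using s_ge by simp
  qed
  have s0: "s \<ge> 0" using s_ge2 sb0 by simp
  have s1: "s \<le> 1/2" using s_le sb1 by simp
  have q1: "s/sg \<ge> 1 - sg^2" using s_ge sb0 by (simp add: field_simps)
  have q1': "s/sg \<le> 1" using s_le sb0 by simp
  have phi_def': "\<phi> = arctan s" by (simp add: \<phi>_def s_def)
  have phi0: "\<phi> \<ge> 0" using s0 by (simp add: phi_def') 
  have phis: "\<phi> \<le> s" using s0 by (simp add: phi_def' arctan_le_self)
  define w where "w = (1 + s^2) powr (-1/2)"
  have "w = inverse ((1+s^2) powr (1/2))" unfolding w_def by (subst powr_minus[symmetric]) simp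
  also have "\<dots> = inverse (sqrt (1+s^2))" by (simp add: powr_half_sqrt add_nonneg_nonneg)
  finally have w_eq: "s * w = sin \<phi>" by (simp add: phi_def' sin_arctan divide_inverse)
  have phiw: "\<phi> \<ge> s * w" using w_eq sin_x_le_x[OF phi0] by simp
  have w0: "w \<ge> 0" by (simp add: w_def)
  have w1: "w \<ge> 1/2"
  proof -
    have "w \<ge> 1 - (1/2) * s^2" unfolding w_def using powr_bernoulli_neg[of "s^2" "1/2"] by simp
    moreover have "s^2 \<le> (1/2)^2" by (rule power_mono) (use s1 s0 in auto)
    hence "s^2 \<le> 1/4" by (simp add: power_divide)
    ultimately show ?thesis by linarith
  qed
  have bphi1: "\<beta> * \<phi> \<le> 1"
  proof -
    have "\<beta> * \<phi> \<le> \<beta> * sg" using phis s_le b0 by (intro mult_left_mono) auto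
    thus ?thesis using sb2 by linarith
  qed
  have bphi0: "\<beta> * \<phi> \<ge> 0" using b0 phi0 by simp
  have "\<beta>*\<phi> \<le> \<beta>* s" using phis b0 by (intro mult_left_mono) auto
  hence sinub: "sin (\<beta>*\<phi>) \<le> \<beta> * s" using sin_x_le_x[OF bphi0] by linarith
  have sin0: "sin (\<beta>*\<phi>) \<ge> 0" using bphi0 bphi1 pi_gt3 by (intro sin_ge_zero) linarith+
  have sinlb: "sin (\<beta>*\<phi>) \<ge> (\<beta>*\<phi>) * (1 - (\<beta>*\<phi>)^2/6)"
    using sin_ge_cubic[OF bphi0] by (simp add: power3_eq_cube power2_eq_square algebra_simps)
  have "(1 - sg^2)*(x * sg) \<ge> 0" using sbsq sb0 x0 by (intro mult_nonneg_nonneg) auto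
  hence y0: "y \<ge> 0" using y1 by linarith
  have rm: "r powr (-\<beta>) = x powr (-\<beta>) * (1 + s^2) powr (-\<beta>/2)"
    using rpow_decomp[OF x0, of y "-\<beta>"] by (simp add: r_def s_def)
  have rp: "r powr \<beta> = x powr \<beta> * (1 + s^2) powr (\<beta>/2)"
    using rpow_decomp[OF x0, of y "\<beta>"] by (simp add: r_def s_def)
  have xb0: "x powr \<beta> > 0" "x powr (-\<beta>) > 0" using x0 by auto
  have rp_ge: "r powr \<beta> \<ge> x powr \<beta>"
  proof -
    have "(1 + s^2) powr (\<beta>/2) \<ge> 1" using b0 by (intro ge_one_powr_ge_zero) auto
    thus ?thesis unfolding rp using xb0 by (simp add: mult_le_cancel_left1)
  qed
  have rm_le: "r powr (-\<beta>) \<le> x powr (-\<beta>)"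
  proof -
    have "(1 + s^2) powr (-\<beta>/2) \<le> (1 + s^2) powr 0" using b0 by (intro powr_mono) auto
    moreover have "1 + s^2 \<noteq> 0" by (smt (verit) zero_le_power2)
    ultimately have "(1 + s^2) powr (-\<beta>/2) \<le> 1" by simp
    thus ?thesis unfolding rm using xb0 by (simp add: mult_le_cancel_left1)
  qed
  have r2x: "r \<le> 2*x"
  proof -
    have "x * sg \<le> x * 1" using sb1 x0 by (intro mult_left_mono) auto
    hence "y \<le> x" using y2 by linarith
    hence "y^2 \<le> x^2" using y0 by (intro power_mono) auto
    moreover have "(2*x)^2 = 4*x^2" by (simp add: power_mult_distrib)
    moreover have "x^2 \<ge> 0" by simp
    ultimately have "x^2 + y^2 \<le> (2*x)^2" by linarith
    hence "r \<le> sqrt ((2*x)^2)" unfolding r_def by (rule real_sqrt_le_mono)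
    hence "r \<le> \<bar>2*x\<bar>" by (simp only: real_sqrt_abs)
    thus ?thesis using x0 by simp
  qed
  have r0: "r \<ge> 0" by (simp add: r_def)
  have rp_le: "r powr \<beta> \<le> (2*x) powr \<beta>" using r2x r0 b0 by (intro powr_mono2) auto
  have A0: "A \<ge> 0" using b0 C0 by (simp add: A_def)
  have B0: "B \<ge> 0" using b0 C0 K0 by (simp add: B_def)
  have T1u: "sin (\<beta>*\<phi>) * (A * r powr (-\<beta>)) \<le> pi/2"
  proof -
    have "sin (\<beta>*\<phi>) * (A * r powr (-\<beta>)) \<le> (\<beta> * s) * (A * x powr (-\<beta>))"
      using sinub sin0 rm_le A0 by (intro mult_mono mult_left_mono) auto
    also have "\<dots> = (A * \<beta> * x powr (-\<beta>) * sg) * (s/sg)" using sb0 by (simp add: field_simps)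
    also have "\<dots> = pi/2 * (s/sg)" by (simp add: key)
    also have "\<dots> \<le> pi/2 * 1" using q1' by (intro mult_left_mono) auto
    finally show ?thesis by simp
  qed
  have T2u: "sin (\<beta>*\<phi>) * (B * r powr \<beta>) \<le> pi"
  proof -
    have "sin (\<beta>*\<phi>) * (B * r powr \<beta>) \<le> 1 * (B * r powr \<beta>)"
      using B0 by (intro mult_right_mono) auto
    also have "\<dots> \<le> B * (2*x) powr \<beta>" using rp_le B0 by (simp add: mult_left_mono)
    finally show ?thesis using Bx by linarith
  qed
  have bsw: "\<beta> * \<phi> \<ge> \<beta> * s * w" using phiw b0 by (simp add: mult_left_mono mult.assoc)
  have "\<beta> * s \<le> \<beta> * sg" using s_le b0 by (intro mult_left_mono) auto
  hence bs1: "\<beta> * s \<le> 1" using sb2 by linarith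
  have bs0: "\<beta> * s \<ge> 0" using b0 s0 by simp
  have sl1: "sin (\<beta>*\<phi>) \<ge> (\<beta> * s * w) * (1 - \<beta>^2 * s^2/6)"
  proof -
    have "(\<beta>*\<phi>)^2 \<le> (\<beta>* s)^2" using bphi0 phis b0 by (intro power_mono mult_left_mono) auto
    hence "1 - (\<beta>*\<phi>)^2/6 \<ge> 1 - \<beta>^2 * s^2/6" by (simp add: power_mult_distrib)
    moreover have "(\<beta>* s)^2 \<le> 1" using bs1 bs0 by (simp add: power_le_one)
    hence "1 - \<beta>^2 * s^2/6 \<ge> 0" by (simp add: power_mult_distrib)
    ultimately have "(\<beta> * s * w) * (1 - \<beta>^2 * s^2/6) \<le> (\<beta>*\<phi>) * (1 - (\<beta>*\<phi>)^2/6)"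
      using bsw bs0 w0 bphi0 by (intro mult_mono[of "\<beta> * s * w"]) auto
    thus ?thesis using sinlb by linarith
  qed
  have wexp: "w * (1 + s^2) powr (-\<beta>/2) = (1 + s^2) powr (-(1/(2*\<alpha>)))"
  proof -
    have eq: "-(1/(2*\<alpha>)) = -1/2 + -\<beta>/2" using a0 by (simp add: \<beta>_def field_simps)
    show ?thesis unfolding w_def by (simp only: eq powr_add)
  qed
  have bern: "(1 + s^2) powr (-(1/(2*\<alpha>))) \<ge> 1 - sg^2/(2*\<alpha>)"
  proof -
    have "(1 + s^2) powr (-(1/(2*\<alpha>))) \<ge> 1 - (1/(2*\<alpha>)) * s^2"
      using a0 by (intro powr_bernoulli_neg) auto
    moreover have "s^2 \<le> sg^2" using s0 s_le by (intro power_mono) auto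
    hence "(1/(2*\<alpha>)) * s^2 \<le> sg^2/(2*\<alpha>)" using a0 by (simp add: divide_right_mono)
    ultimately show ?thesis by linarith
  qed
  have T1l: "sin (\<beta>*\<phi>) * (A * r powr (-\<beta>)) \<ge> pi/2 * (1 - K * sg^2)"
  proof -
    have Arm0: "A * r powr (-\<beta>) \<ge> 0" using A0 by simp
    have "sin (\<beta>*\<phi>) * (A * r powr (-\<beta>)) \<ge> ((\<beta> * s * w) * (1 - \<beta>^2 * s^2/6)) * (A * r powr (-\<beta>))"
      using sl1 Arm0 by (intro mult_right_mono) auto
    also have "((\<beta> * s * w) * (1 - \<beta>^2 * s^2/6)) * (A * r powr (-\<beta>)) =
        (A * \<beta> * x powr (-\<beta>) * sg) * ((s/sg) * (w * (1 + s^2) powr (-\<beta>/2)) * (1 - \<beta>^2 * s^2/6))"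
      using sb0 unfolding rm by (simp add: field_simps)
    also have "\<dots> = pi/2 * ((s/sg) * (1 + s^2) powr (-(1/(2*\<alpha>))) * (1 - \<beta>^2 * s^2/6))"
      using wexp by (simp add: key)
    finally have 1: "sin (\<beta>*\<phi>) * (A * r powr (-\<beta>)) \<ge> pi/2 * ((s/sg) * (1 + s^2) powr (-(1/(2*\<alpha>))) * (1 - \<beta>^2 * s^2/6))" .
    have c3: "1 - \<beta>^2 * s^2/6 \<ge> 1 - \<beta>^2 * sg^2/6"
    proof -
      have "s^2 \<le> sg^2" using s0 s_le by (intro power_mono) auto
      thus ?thesis by (simp add: mult_left_mono)
    qed
    have bsg: "(\<beta>* sg)^2 \<le> 1" using sb2 b0 sb0 by (simp add: power_le_one)
    have "(1 - sg^2) * (1 - sg^2/(2*\<alpha>)) * (1 - \<beta>^2 * sg^2/6) \<le> (s/sg) * (1 + s^2) powr (-(1/(2*\<alpha>))) * (1 - \<beta>^2 * s^2/6)"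
      apply (intro mult_mono)
      using q1 bern c3 sbsq sb3 bsg s0 sb0 by (auto simp: power_mult_distrib)
    moreover have "(1 - sg^2) * (1 - sg^2/(2*\<alpha>)) * (1 - \<beta>^2 * sg^2/6) \<ge> 1 - sg^2 - sg^2/(2*\<alpha>) - \<beta>^2 * sg^2/6"
      apply (rule prod3_ge)
      using sbsq sb3 bsg a0 by (auto simp: power_mult_distrib)
    moreover have "1 - sg^2 - sg^2/(2*\<alpha>) - \<beta>^2 * sg^2/6 = 1 - K * sg^2" by (simp add: K_def field_simps)
    ultimately have "pi/2 * (1 - K * sg^2) \<le> pi/2 * ((s/sg) * (1 + s^2) powr (-(1/(2*\<alpha>))) * (1 - \<beta>^2 * s^2/6))"
      by (intro mult_left_mono) auto
    thus ?thesis using 1 by linarith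
  qed
  have T2l: "sin (\<beta>*\<phi>) * (B * r powr \<beta>) \<ge> pi/2 * K * sg^2"
  proof -
    have "(\<beta>*\<phi>)^2 \<le> 1" using bphi0 bphi1 by (simp add: power_le_one)
    hence "(\<beta>*\<phi>) * (5/6) \<le> (\<beta>*\<phi>) * (1 - (\<beta>*\<phi>)^2/6)" using bphi0 by (intro mult_left_mono) auto
    hence "sin (\<beta>*\<phi>) \<ge> (\<beta>*\<phi>) * (5/6)" using sinlb by linarith
    moreover have "\<beta>*\<phi> \<ge> \<beta> * sg / 4"
    proof -
      have "\<beta> * s * w \<ge> \<beta> * (sg/2) * (1/2)" using b0 s_ge2 w1 sb0 by (intro mult_mono) auto
      thus ?thesis using bsw by simp
    qed
    ultimately have "sin (\<beta>*\<phi>) \<ge> (\<beta> * sg / 4) * (5/6)" by linarith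
    moreover have "B * r powr \<beta> \<ge> B * (Ca * sg)" using rp_ge B0 sbX Ca0 by (simp add: mult_left_mono)
    ultimately have "sin (\<beta>*\<phi>) * (B * r powr \<beta>) \<ge> ((\<beta> * sg / 4) * (5/6)) * (B * (Ca * sg))"
      using b0 sb0 B0 Ca0 sin0 by (intro mult_mono[of "(\<beta> * sg / 4) * (5/6)"]) auto
    also have "((\<beta> * sg / 4) * (5/6)) * (B * (Ca * sg)) = (5/24) * (B * \<beta> * Ca) * sg^2"
      by (simp add: power2_eq_square)
    also have "\<dots> = (5/24) * (3*pi*K) * sg^2" by (simp add: BCa)
    also have "\<dots> = (5/8) * (pi*K* sg^2)" by simp
    finally have "sin (\<beta>*\<phi>) * (B * r powr \<beta>) \<ge> (5/8) * (pi*K* sg^2)" .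
    moreover have "pi*K* sg^2 \<ge> 0" using K0 by simp
    ultimately show ?thesis by simp
  qed
  have sum: "sin(\<beta>*\<phi>)*(A*r powr (-\<beta>) + B*r powr \<beta>) = sin (\<beta>*\<phi>) * (A * r powr (-\<beta>)) + sin (\<beta>*\<phi>) * (B * r powr \<beta>)"
    by (simp add: distrib_left)
  show ?thesis unfolding sum using T1u T2u T1l T2l by (simp add: algebra_simps)
qed

definition "betac (\<alpha>::real) = 1/\<alpha> - 1"
definition "Acst \<alpha> C = pi * C powr (1/\<alpha>) / (2*betac \<alpha>)"
definition "Kcst \<alpha> = 1 + 1/(2*\<alpha>) + (betac \<alpha>)^2/6"
definition "Bcst \<alpha> C = 3*pi*Kcst \<alpha>/(betac \<alpha> * C powr (1/\<alpha>))"
definition "sgf \<alpha> C x = (x/C) powr (1/\<alpha>) / (x::real)"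
definition "Hf \<alpha> C z = exp (- of_real (Acst \<alpha> C) * z powr of_real (- betac \<alpha>) + of_real (Bcst \<alpha> C) * z powr of_real (betac \<alpha>))"
definition "uf \<alpha> C z = Re (Hf \<alpha> C z)"
definition "goodx \<alpha> C x \<longleftrightarrow> sgf \<alpha> C x \<le> 1/2 \<and> betac \<alpha> * sgf \<alpha> C x \<le> 1 \<and> (sgf \<alpha> C x)^2/(2*\<alpha>) \<le> 1 \<and> Bcst \<alpha> C * (2*x) powr betac \<alpha> \<le> pi"

locale cs =
  fixes \<alpha> C :: real
  assumes a0: "0 < \<alpha>" and a1: "\<alpha> < 1" and C0: "C > 0"
begin

abbreviation "\<beta> \<equiv> betac \<alpha>"
abbreviation "A \<equiv> Acst \<alpha> C"
abbreviation "B \<equiv> Bcst \<alpha> C"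
abbreviation "Ca \<equiv> C powr (1/\<alpha>)"

lemma b0: "\<beta> > 0" using a0 a1 by (simp add: betac_def field_simps)
lemma Ca0: "Ca > 0" using C0 by simp
lemma A0: "A > 0" using b0 C0 by (simp add: Acst_def)
lemma B0: "B > 0" using b0 C0 a0 by (simp add: Bcst_def Kcst_def add_pos_nonneg)

lemma sgf_eq: assumes "x > 0" shows "sgf \<alpha> C x = x powr \<beta> / Ca"
proof -
  have "(x/C) powr (1/\<alpha>) = x powr (1/\<alpha>) / Ca" using assms C0 by (simp add: powr_divide)
  moreover have "x powr (1/\<alpha>) / x = x powr \<beta>" using assms by (simp add: betac_def powr_diff)
  hence "x powr (1/\<alpha>) = x powr \<beta> * x" using assms by (simp add: field_simps)
  ultimately show ?thesis unfolding sgf_def using assms by (simp add: field_simps)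
qed

lemma sgf_pos: "x > 0 \<Longrightarrow> sgf \<alpha> C x > 0" using sgf_eq Ca0 by simp

lemma sgf_mono: assumes "0 < x" "x \<le> x'" shows "sgf \<alpha> C x \<le> sgf \<alpha> C x'"
  using assms sgf_eq[of x] sgf_eq[of x'] Ca0 b0 by (simp add: divide_right_mono powr_mono2)

lemma goodx_mono: assumes "goodx \<alpha> C x'" "0 < x" "x \<le> x'" shows "goodx \<alpha> C x"
proof -
  have s: "sgf \<alpha> C x \<le> sgf \<alpha> C x'" by (rule sgf_mono[OF assms(2,3)])
  have s0: "sgf \<alpha> C x > 0" by (rule sgf_pos[OF assms(2)])
  have "(sgf \<alpha> C x)^2 \<le> (sgf \<alpha> C x')^2" using s s0 by (intro power_mono) auto
  hence "(sgf \<alpha> C x)^2/(2*\<alpha>) \<le> (sgf \<alpha> C x')^2/(2*\<alpha>)" using a0 by (simp add: divide_right_mono)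
  moreover have "\<beta> * sgf \<alpha> C x \<le> \<beta> * sgf \<alpha> C x'" using s b0 by (simp add: mult_left_mono)
  moreover have "(2*x) powr \<beta> \<le> (2*x') powr \<beta>" using assms b0 by (intro powr_mono2) auto
  hence "B * (2*x) powr \<beta> \<le> B * (2*x') powr \<beta>" using B0 by (simp add: mult_left_mono)
  ultimately show ?thesis using assms(1) s unfolding goodx_def by linarith
qed

lemma bconv:
  assumes "x > 0" "y \<ge> 0"
  shows "C * y powr \<alpha> < x \<longleftrightarrow> y < x * sgf \<alpha> C x"
    and "C * y powr \<alpha> \<le> x \<longleftrightarrow> y \<le> x * sgf \<alpha> C x"
proof -
  have xs: "x * sgf \<alpha> C x = (x/C) powr (1/\<alpha>)" using assms unfolding sgf_def by simp
  have inv: "((x/C) powr (1/\<alpha>)) powr \<alpha> = x/C" using assms C0 a0 by (simp add: powr_powr)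
  have "C * y powr \<alpha> < x \<longleftrightarrow> y powr \<alpha> < x/C" using C0 by (simp add: field_simps mult.commute)
  also have "\<dots> \<longleftrightarrow> y powr \<alpha> < ((x/C) powr (1/\<alpha>)) powr \<alpha>" using inv by simp
  also have "\<dots> \<longleftrightarrow> y < (x/C) powr (1/\<alpha>)"
    using assms a0 powr_less_mono2[of \<alpha> y] powr_less_mono2[of \<alpha> "(x/C) powr (1/\<alpha>)" y]
    by (smt (verit) powr_ge_zero)
  finally show "C * y powr \<alpha> < x \<longleftrightarrow> y < x * sgf \<alpha> C x" using xs by simp
  have "C * y powr \<alpha> \<le> x \<longleftrightarrow> y powr \<alpha> \<le> x/C" using C0 by (simp add: field_simps mult.commute)
  also have "\<dots> \<longleftrightarrow> y powr \<alpha> \<le> ((x/C) powr (1/\<alpha>)) powr \<alpha>" using inv by simp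
  also have "\<dots> \<longleftrightarrow> y \<le> (x/C) powr (1/\<alpha>)"
    using assms a0 powr_less_mono2[of \<alpha> y] powr_less_mono2[of \<alpha> "(x/C) powr (1/\<alpha>)" y]
    by (smt (verit) powr_ge_zero)
  finally show "C * y powr \<alpha> \<le> x \<longleftrightarrow> y \<le> x * sgf \<alpha> C x" using xs by simp
qed


lemma Hf_holo: "Hf \<alpha> C holomorphic_on {z. Re z > 0}"
proof -
  have "(\<lambda>z. exp (- of_real A * z powr of_real (- \<beta>) + of_real B * z powr of_real \<beta>)) holomorphic_on {z. Re z > 0}"
    by (intro holomorphic_intros) (auto simp: complex_nonpos_Reals_iff)
  thus ?thesis unfolding Hf_def[abs_def] .
qed

lemma uf_polar:
  assumes "Re z > 0"
  shows "uf \<alpha> C z = exp (cos (\<beta> * arctan (\<bar>Im z\<bar>/Re z)) * (B * cmod z powr \<beta> - A * cmod z powr (-\<beta>))) *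
     cos (sin (\<beta> * arctan (\<bar>Im z\<bar>/Re z)) * (A * cmod z powr (-\<beta>) + B * cmod z powr \<beta>))"
proof -
  have z0: "z \<noteq> 0" using assms by auto
  have ar: "Arg z = arctan (Im z / Re z)" by (rule arg_conv_arctan[OF assms])
  have e: "uf \<alpha> C z = exp (cos (\<beta> * Arg z) * (B * cmod z powr \<beta> - A * cmod z powr (-\<beta>))) *
     cos (sin (\<beta> * Arg z) * (A * cmod z powr (-\<beta>) + B * cmod z powr \<beta>))"
    unfolding uf_def Hf_def using u_polar[OF z0, of A "\<beta>" B] by simp
  show ?thesis
  proof (cases "Im z \<ge> 0")
    case True thus ?thesis using e ar by simp
  next
    case False
    hence "Arg z = - arctan (\<bar>Im z\<bar>/Re z)" using ar by (simp add: arctan_minus[symmetric])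
    thus ?thesis using e by simp
  qed
qed

lemma uf_band:
  assumes x0: "0 < x" and g: "goodx \<alpha> C x"
    and y1: "(1 - (sgf \<alpha> C x)^2) * (x * sgf \<alpha> C x) \<le> \<bar>y\<bar>" and y2: "\<bar>y\<bar> \<le> x * sgf \<alpha> C x"
  shows "uf \<alpha> C (Complex x y) \<le> 0"
proof -
  have bd: "pi/2 \<le> sin(\<beta>*arctan (\<bar>y\<bar>/x))*(A* sqrt (x^2+\<bar>y\<bar>^2) powr (-\<beta>) + B* sqrt (x^2+\<bar>y\<bar>^2) powr \<beta>) \<and>
        sin(\<beta>*arctan (\<bar>y\<bar>/x))*(A* sqrt (x^2+\<bar>y\<bar>^2) powr (-\<beta>) + B* sqrt (x^2+\<bar>y\<bar>^2) powr \<beta>) \<le> 3*pi/2"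
    using band[OF a0 a1 C0 x0, of "\<bar>y\<bar>"] g y1 y2
    unfolding goodx_def sgf_def Acst_def Bcst_def Kcst_def betac_def by simp
  have c: "cmod (Complex x y) = sqrt (x^2+\<bar>y\<bar>^2)" by (simp add: cmod_def)
  have "cos (sin (\<beta> * arctan (\<bar>y\<bar>/x)) * (A * cmod (Complex x y) powr (-\<beta>) + B * cmod (Complex x y) powr \<beta>)) \<le> 0"
    unfolding c using bd cos_nonpos_band by blast
  moreover have "uf \<alpha> C (Complex x y) = exp (cos (\<beta> * arctan (\<bar>y\<bar>/x)) * (B * cmod (Complex x y) powr \<beta> - A * cmod (Complex x y) powr (-\<beta>))) *
     cos (sin (\<beta> * arctan (\<bar>y\<bar>/x)) * (A * cmod (Complex x y) powr (-\<beta>) + B * cmod (Complex x y) powr \<beta>))"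
    using uf_polar[of "Complex x y"] x0 by simp
  ultimately show ?thesis by (simp add: mult_nonneg_nonpos)
qed

lemma uf_axis:
  assumes "t > 0" shows "uf \<alpha> C (of_real t) \<ge> exp (- A * t powr (-\<beta>))"
proof -
  have "uf \<alpha> C (of_real t) = exp (B * t powr \<beta> - A * t powr (-\<beta>))"
    using uf_polar[of "of_real t"] assms by simp
  moreover have "B * t powr \<beta> \<ge> 0" using B0 by simp
  ultimately show ?thesis by simp
qed

lemma uf_bound:
  assumes x0: "0 < Re z" and g: "goodx \<alpha> C (Re z)" and y2: "\<bar>Im z\<bar> \<le> Re z * sgf \<alpha> C (Re z)"
  shows "uf \<alpha> C z \<le> exp (pi - A/2 * cmod z powr (-\<beta>))"
proof -
  define x where "x = Re z"
  define y where "y = \<bar>Im z\<bar>"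
  define \<phi> where "\<phi> = arctan (y/x)"
  define r where "r = cmod z"
  have x0': "x > 0" using x0 by (simp add: x_def)
  have y0: "y \<ge> 0" by (simp add: y_def)
  have sg0: "sgf \<alpha> C x > 0" using sgf_pos[OF x0'] .
  have g': "sgf \<alpha> C x \<le> 1/2" "\<beta> * sgf \<alpha> C x \<le> 1" "B * (2*x) powr \<beta> \<le> pi"
    using g unfolding goodx_def x_def by auto
  have yx: "y/x \<le> sgf \<alpha> C x" using y2 x0' by (simp add: x_def y_def field_simps)
  have phi0: "\<phi> \<ge> 0" using y0 x0' by (simp add: \<phi>_def)
  have "\<phi> \<le> y/x" unfolding \<phi>_def using y0 x0' by (intro arctan_le_self) simp
  hence "\<beta> * \<phi> \<le> \<beta> * sgf \<alpha> C x" using yx b0 by (intro mult_left_mono) auto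
  hence bp1: "\<beta> * \<phi> \<le> 1" using g' by linarith
  have bp0: "\<beta> * \<phi> \<ge> 0" using b0 phi0 by simp
  have "(\<beta> * \<phi>)^2 \<le> 1" using bp0 bp1 by (simp add: power_le_one)
  hence c12: "cos (\<beta> * \<phi>) \<ge> 1/2" using cos_ge_quad[of "\<beta> * \<phi>"] by linarith
  have c1: "cos (\<beta> * \<phi>) \<le> 1" by simp
  have r2x: "r \<le> 2*x"
  proof -
    have "y \<le> x * sgf \<alpha> C x" using y2 by (simp add: x_def y_def)
    also have "\<dots> \<le> x * 1" using g' x0' by (intro mult_left_mono) auto
    finally have yx1: "y \<le> x" by simp
    have "r \<le> \<bar>Re z\<bar> + \<bar>Im z\<bar>" unfolding r_def by (rule cmod_le)
    thus ?thesis using yx1 x0' by (simp add: x_def y_def)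
  qed
  have "r powr \<beta> \<le> (2*x) powr \<beta>" using r2x b0 by (intro powr_mono2) (auto simp: r_def)
  hence Br: "B * r powr \<beta> \<le> pi" using g' B0 by (smt (verit) mult_left_mono)
  have Br0: "B * r powr \<beta> \<ge> 0" "A * r powr (-\<beta>) \<ge> 0" using B0 A0 by auto
  have "cos (\<beta> * \<phi>) * (B * r powr \<beta> - A * r powr (-\<beta>)) = cos (\<beta> * \<phi>) * (B * r powr \<beta>) - cos (\<beta> * \<phi>) * (A * r powr (-\<beta>))"
    by (simp add: algebra_simps)
  also have "\<dots> \<le> 1 * (B * r powr \<beta>) - (1/2) * (A * r powr (-\<beta>))"
    using c12 c1 Br0 by (intro diff_mono mult_right_mono) auto
  finally have re: "cos (\<beta> * \<phi>) * (B * r powr \<beta> - A * r powr (-\<beta>)) \<le> pi - A/2 * r powr (-\<beta>)" using Br by simp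
  have "uf \<alpha> C z = exp (cos (\<beta> * \<phi>) * (B * r powr \<beta> - A * r powr (-\<beta>))) *
     cos (sin (\<beta> * \<phi>) * (A * r powr (-\<beta>) + B * r powr \<beta>))"
    using uf_polar[OF x0] by (simp add: \<phi>_def r_def x_def y_def)
  also have "\<dots> \<le> exp (cos (\<beta> * \<phi>) * (B * r powr \<beta> - A * r powr (-\<beta>))) * 1"
    by (intro mult_left_mono) auto
  also have "\<dots> \<le> exp (pi - A/2 * r powr (-\<beta>))" using re by simp
  finally show ?thesis by (simp add: r_def)
qed

end

lemma cmod_sq_expand: "cmod (a + w)^2 = cmod a^2 + cmod w^2 + Re (2 * cnj a * w)"
  by (simp only: cmod_power2) (simp add: power2_eq_square algebra_simps)

context cs begin

lemma circ_mean_comb: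
  assumes sub: "cball a s \<subseteq> {z. Re z > 0}" and s0: "s > 0"
  shows "((\<lambda>t. c1 * uf \<alpha> C (a + of_real s * cis t) + c2 * (cmod (a + of_real s * cis t)^2 - R2))
           has_integral (2*pi*(c1 * uf \<alpha> C a + c2*(cmod a^2 + s^2 - R2)))) {0..2*pi}"
proof -
  have oh: "open {z. Re z > 0}" by (simp add: open_halfspace_Re_gt)
  have h1: "((\<lambda>t. uf \<alpha> C (a + of_real s * cis t)) has_integral (2*pi*uf \<alpha> C a)) {0..2*pi}"
    using has_integral_Re[OF holo_mean[OF Hf_holo oh sub s0]] by (simp add: uf_def)
  have hol2: "(\<lambda>z. 2 * cnj a * (z - a)) holomorphic_on UNIV" by (intro holomorphic_intros)
  have h2: "((\<lambda>t. Re (2 * cnj a * (a + of_real s * cis t - a))) has_integral 0) {0..2*pi}"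
    using has_integral_Re[OF holo_mean[OF hol2 open_UNIV subset_UNIV[of "cball a s"] s0]] by simp
  have h3: "((\<lambda>t. cmod a^2 + s^2 - R2) has_integral (2*pi*(cmod a^2 + s^2 - R2))) {0..2*pi}"
    using has_integral_const_real[of "cmod a^2 + s^2 - R2" 0 "2*pi"] by simp
  have h23: "((\<lambda>t. Re (2 * cnj a * (a + of_real s * cis t - a)) + (cmod a^2 + s^2 - R2)) has_integral (0 + 2*pi*(cmod a^2 + s^2 - R2))) {0..2*pi}"
    by (rule has_integral_add[OF h2 h3])
  have eq: "Re (2 * cnj a * (a + of_real s * cis t - a)) + (cmod a^2 + s^2 - R2) = cmod (a + of_real s * cis t)^2 - R2" for t
    using cmod_sq_expand[of a "of_real s * cis t"] s0 by (simp add: norm_mult)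
  have h4: "((\<lambda>t. cmod (a + of_real s * cis t)^2 - R2) has_integral (2*pi*(cmod a^2 + s^2 - R2))) {0..2*pi}"
    using h23 unfolding eq by simp
  have "((\<lambda>t. c1 * uf \<alpha> C (a + of_real s * cis t) + c2 * (cmod (a + of_real s * cis t)^2 - R2))
           has_integral (c1 * (2*pi*uf \<alpha> C a) + c2 * (2*pi*(cmod a^2 + s^2 - R2)))) {0..2*pi}"
    by (intro has_integral_add has_integral_mult_right h1 h4)
  thus ?thesis by (simp add: algebra_simps)
qed


lemma uf_cont: "continuous_on {z. Re z > 0} (uf \<alpha> C)"
proof -
  have "continuous_on {z. Re z > 0} (Hf \<alpha> C)" using Hf_holo holomorphic_on_imp_continuous_on by blast
  hence "continuous_on {z. Re z > 0} (\<lambda>z. Re (Hf \<alpha> C z))" by (intro continuous_intros)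
  thus ?thesis unfolding uf_def[abs_def] .
qed

lemma cont_Impowr: "continuous_on UNIV (\<lambda>z::complex. C * \<bar>Im z\<bar> powr \<alpha>)"
proof -
  have "continuous_on UNIV (\<lambda>z::complex. \<bar>Im z\<bar> powr \<alpha>)"
    by (rule continuous_on_powr') (use a0 in \<open>auto intro!: continuous_intros\<close>)
  thus ?thesis by (rule continuous_on_mult_left)
qed

lemma D_props:
  fixes x1 :: real
  defines "D \<equiv> {z. 0 < Re z \<and> Re z < x1 \<and> C * \<bar>Im z\<bar> powr \<alpha> < Re z}"
  assumes "x1 > 0" "goodx \<alpha> C x1"
  shows "open D" "bounded D" "D \<subseteq> {z. Re z > 0}"
    "\<And>z. z \<in> D \<Longrightarrow> goodx \<alpha> C (Re z) \<and> \<bar>Im z\<bar> < Re z * sgf \<alpha> C (Re z) \<and> cmod z \<le> 2 * x1"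
    "closure D \<subseteq> {z. 0 \<le> Re z \<and> Re z \<le> x1 \<and> C * \<bar>Im z\<bar> powr \<alpha> \<le> Re z}"
proof -
  have "open ({z. 0 < Re z} \<inter> {z. Re z < x1} \<inter> {z. C * \<bar>Im z\<bar> powr \<alpha> < Re z})"
    by (intro open_Int open_halfspace_Re_gt open_halfspace_Re_lt open_Collect_less
        continuous_on_Re continuous_on_id) (use cont_Impowr in auto)
  moreover have "D = {z. 0 < Re z} \<inter> {z. Re z < x1} \<inter> {z. C * \<bar>Im z\<bar> powr \<alpha> < Re z}"
    by (auto simp: D_def)
  ultimately show "open D" by simp
  show "D \<subseteq> {z. Re z > 0}" by (auto simp: D_def)
  show pr: "goodx \<alpha> C (Re z) \<and> \<bar>Im z\<bar> < Re z * sgf \<alpha> C (Re z) \<and> cmod z \<le> 2 * x1" if "z \<in> D" for z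
  proof -
    have z: "0 < Re z" "Re z < x1" "C * \<bar>Im z\<bar> powr \<alpha> < Re z" using that by (auto simp: D_def)
    have g: "goodx \<alpha> C (Re z)" using goodx_mono[OF assms(3) z(1)] z(2) by simp
    have i: "\<bar>Im z\<bar> < Re z * sgf \<alpha> C (Re z)" using bconv(1)[OF z(1), of "\<bar>Im z\<bar>"] z(3) by simp
    have "Re z * sgf \<alpha> C (Re z) \<le> Re z * 1" using g z(1) unfolding goodx_def by (intro mult_left_mono) auto
    hence "\<bar>Im z\<bar> \<le> Re z" using i by linarith
    hence "cmod z \<le> Re z + Re z" using cmod_le[of z] by linarith
    thus ?thesis using g i z(2) by simp
  qed
  show "bounded D"
    unfolding bounded_iff by (rule exI[of _ "2*x1"]) (use pr in blast)
  define S where "S = {z. 0 \<le> Re z \<and> Re z \<le> x1 \<and> C * \<bar>Im z\<bar> powr \<alpha> \<le> Re z}"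
  have "S = {z. 0 \<le> Re z} \<inter> {z. Re z \<le> x1} \<inter> {z. C * \<bar>Im z\<bar> powr \<alpha> \<le> Re z}"
    by (auto simp: S_def)
  moreover have "closed ({z. 0 \<le> Re z} \<inter> {z. Re z \<le> x1} \<inter> {z. C * \<bar>Im z\<bar> powr \<alpha> \<le> Re z})"
    by (intro closed_Int closed_halfspace_Re_ge closed_halfspace_Re_le closed_Collect_le
        continuous_on_Re continuous_on_id) (use cont_Impowr in auto)
  ultimately have cS: "closed S" by simp
  have "D \<subseteq> S" by (auto simp: D_def S_def)
  hence "closure D \<subseteq> S" using cS by (rule closure_minimal)
  thus "closure D \<subseteq> {z. 0 \<le> Re z \<and> Re z \<le> x1 \<and> C * \<bar>Im z\<bar> powr \<alpha> \<le> Re z}"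
    by (simp add: S_def)
qed

end

context cs begin

lemma planar:
  fixes f :: "complex \<Rightarrow> real" and x1 m t :: real and Good :: "complex set"
  defines "D \<equiv> {z. 0 < Re z \<and> Re z < x1 \<and> C * \<bar>Im z\<bar> powr \<alpha> < Re z}"
  assumes x1: "x1 > 0" "goodx \<alpha> C x1"
   and usc: "\<And>w e. w \<in> D \<Longrightarrow> e > 0 \<Longrightarrow> \<exists>d>0. \<forall>z\<in>D. cmod (z - w) < d \<longrightarrow> f z < f w + e"
   and fint: "\<And>a s. s > 0 \<Longrightarrow> cball a s \<subseteq> D \<Longrightarrow>
        set_integrable lborel {0..2*pi} (\<lambda>\<theta>. f (a + of_real s * cis \<theta>)) \<and>
        f a \<le> (1/(2*pi)) * (LINT \<theta>:{0..2*pi}|lborel. f (a + of_real s * cis \<theta>))"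
   and fneg: "\<And>z. z \<in> D \<Longrightarrow> f z < 0"
   and m0: "m > 0"
   and oG: "open Good" and fG: "\<And>z. z \<in> D \<Longrightarrow> z \<in> Good \<Longrightarrow> f z \<le> -m"
   and cutG: "\<And>y. \<bar>y\<bar> < (1 - (sgf \<alpha> C x1)^2) * (x1 * sgf \<alpha> C x1) \<Longrightarrow> Complex x1 y \<in> Good"
   and t: "0 < t" "t < x1"
  shows "f (of_real t) \<le> -(m / exp pi) * exp (- A * t powr (-\<beta>))"
proof -
  note Dp = D_props[OF x1, folded D_def]
  define E where "E = exp pi"
  define R2 where "R2 = (2*x1)^2"
  have E0: "E > 0" by (simp add: E_def)
  have R20: "R2 > 0" using x1 by (simp add: R2_def)
  have ufb: "uf \<alpha> C z \<le> exp (pi - A/2 * cmod z powr (-\<beta>))" if "z \<in> D" for z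
    using uf_bound[of z] Dp(4)[OF that] Dp(3) that by auto
  have ufE: "uf \<alpha> C z \<le> E" if "z \<in> D" for z
  proof -
    have "A/2 * cmod z powr (-\<beta>) \<ge> 0" using A0 by simp
    thus ?thesis using ufb[OF that] unfolding E_def by (smt (verit) exp_mono)
  qed
  have R2b: "cmod z ^ 2 \<le> R2" if "z \<in> D" for z
    unfolding R2_def using Dp(4)[OF that] by (intro power_mono) auto
  have tD: "of_real t \<in> D" using t a0 by (simp add: D_def)
  have key: "f (of_real t) + ((m/E) * uf \<alpha> C (of_real t) + \<epsilon> * (cmod (of_real t :: complex)^2 - R2)) \<le> 0"
    if eps: "\<epsilon> > 0" for \<epsilon>
  proof (rule maxprin[where f = f and D = D and K = m])
    show "bounded D" "open D" using Dp by auto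
    show "\<And>w e. w \<in> D \<Longrightarrow> e > 0 \<Longrightarrow> \<exists>d>0. \<forall>z\<in>D. cmod (z - w) < d \<longrightarrow> f z < f w + e" by (rule usc)
    show "\<And>a s. s > 0 \<Longrightarrow> cball a s \<subseteq> D \<Longrightarrow>
        set_integrable lborel {0..2*pi} (\<lambda>\<theta>. f (a + of_real s * cis \<theta>)) \<and>
        f a \<le> (1/(2*pi)) * (LINT \<theta>:{0..2*pi}|lborel. f (a + of_real s * cis \<theta>))" by (rule fint)
    show "continuous_on D (\<lambda>z. (m/E) * uf \<alpha> C z + \<epsilon> * (cmod z^2 - R2))"
      by (intro continuous_intros continuous_on_subset[OF uf_cont Dp(3)])
    show "of_real t \<in> D" by (rule tD)
    show "f z + ((m/E) * uf \<alpha> C z + \<epsilon> * (cmod z^2 - R2)) \<le> m" if "z \<in> D" for z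
    proof -
      have "(m/E) * uf \<alpha> C z \<le> (m/E) * E" using ufE[OF that] m0 E0 by (intro mult_left_mono) auto
      moreover have "\<epsilon> * (cmod z^2 - R2) \<le> 0" using R2b[OF that] eps by (simp add: mult_nonneg_nonpos)
      ultimately show ?thesis using fneg[OF that] E0 by simp
    qed
    show "(m/E) * uf \<alpha> C a + \<epsilon> * (cmod a^2 - R2) <
        (1/(2*pi)) * (LINT \<theta>:{0..2*pi}|lborel. (m/E) * uf \<alpha> C (a + of_real s * cis \<theta>) + \<epsilon> * (cmod (a + of_real s * cis \<theta>)^2 - R2))"
      if s: "s > 0" "cball a s \<subseteq> D" for a s
    proof -
      have sub: "cball a s \<subseteq> {z. Re z > 0}" using s(2) Dp(3) by auto
      have hi: "((\<lambda>t. (m/E) * uf \<alpha> C (a + of_real s * cis t) + \<epsilon> * (cmod (a + of_real s * cis t)^2 - R2))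
           has_integral (2*pi*((m/E) * uf \<alpha> C a + \<epsilon>*(cmod a^2 + s^2 - R2)))) {0..2*pi}"
        by (rule circ_mean_comb[OF sub s(1)])
      have "continuous_on {0..2*pi} (\<lambda>t. (m/E) * uf \<alpha> C (a + of_real s * cis t) + \<epsilon> * (cmod (a + of_real s * cis t)^2 - R2))"
      proof -
        have mem: "a + of_real s * cis t \<in> cball a s" for t using s(1) by (simp add: dist_norm norm_mult)
        have img: "(\<lambda>t. a + of_real s * cis t) ` {0..2*pi} \<subseteq> {z. Re z > 0}" using sub mem by blast
        have "continuous_on {0..2*pi} (\<lambda>t. uf \<alpha> C (a + of_real s * cis t))"
          by (rule continuous_on_compose2[OF uf_cont _ img]) (intro continuous_intros)
        thus ?thesis by (intro continuous_intros)
      qed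
      hence si: "set_integrable lborel {0..2*pi} (\<lambda>t. (m/E) * uf \<alpha> C (a + of_real s * cis t) + \<epsilon> * (cmod (a + of_real s * cis t)^2 - R2))"
        by (rule borel_integrable_atLeastAtMost')
      have "(LINT \<theta>:{0..2*pi}|lborel. (m/E) * uf \<alpha> C (a + of_real s * cis \<theta>) + \<epsilon> * (cmod (a + of_real s * cis \<theta>)^2 - R2))
          = 2*pi*((m/E) * uf \<alpha> C a + \<epsilon>*(cmod a^2 + s^2 - R2))"
        using set_borel_integral_eq_integral(2)[OF si] integral_unique[OF hi] by simp
      hence "(1/(2*pi)) * (LINT \<theta>:{0..2*pi}|lborel. (m/E) * uf \<alpha> C (a + of_real s * cis \<theta>) + \<epsilon> * (cmod (a + of_real s * cis \<theta>)^2 - R2))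
          = (m/E) * uf \<alpha> C a + \<epsilon>*(cmod a^2 + s^2 - R2)" by simp
      moreover have "\<epsilon> * s^2 > 0" using eps s by simp
      ultimately show ?thesis by (simp add: algebra_simps)
    qed
    show "\<exists>d>0. \<forall>z\<in>D. cmod (z - w) < d \<longrightarrow> f z + ((m/E) * uf \<alpha> C z + \<epsilon> * (cmod z^2 - R2)) < e"
      if w: "w \<in> closure D" "w \<notin> D" and e: "e > 0" for w e
    proof -
      have wc: "0 \<le> Re w" "Re w \<le> x1" "C * \<bar>Im w\<bar> powr \<alpha> \<le> Re w" using Dp(5) w(1) by auto
      have uz: "f z + ((m/E) * uf \<alpha> C z + \<epsilon> * (cmod z^2 - R2)) < (m/E) * uf \<alpha> C z" if "z \<in> D" for z
      proof -
        have "\<epsilon> * (cmod z^2 - R2) \<le> 0" using R2b[OF that] eps by (simp add: mult_nonneg_nonpos)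
        thus ?thesis using fneg[OF that] by simp
      qed
      show ?thesis
      proof (cases "Re w = 0")
        case True
        hence "\<bar>Im w\<bar> powr \<alpha> \<le> 0" using wc C0 by (simp add: mult_le_0_iff)
        hence "\<bar>Im w\<bar> powr \<alpha> = 0" by (smt (verit) powr_ge_zero)
        hence "Im w = 0" by simp
        hence w0: "w = 0" using True by (simp add: complex_eq_iff)
        define L where "L = \<bar>ln (m/e)\<bar> * 2 / A + 1"
        have "\<bar>ln (m/e)\<bar> * 2 / A \<ge> 0" using A0 by simp
        hence L0: "L > 0" unfolding L_def by linarith
        define d where "d = (1/L) powr (1/\<beta>)"
        have d0: "d > 0" using L0 by (simp add: d_def)
        have "f z + ((m/E) * uf \<alpha> C z + \<epsilon> * (cmod z^2 - R2)) < e" if z: "z \<in> D" "cmod (z - w) < d" for z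
        proof -
          have cz: "cmod z < d" "cmod z > 0" using z w0 Dp(3) by auto
          have "cmod z powr \<beta> < d powr \<beta>" using cz b0 by (intro powr_less_mono2) auto
          also have "d powr \<beta> = 1/L" unfolding d_def using L0 b0 by (simp add: powr_powr)
          finally have "cmod z powr \<beta> < 1/L" .
          hence "cmod z powr (-\<beta>) > L" using cz L0 by (simp add: powr_minus field_simps)
          hence "A/2 * cmod z powr (-\<beta>) > A/2 * L" using A0 by simp
          moreover have "A/2 * L \<ge> \<bar>ln (m/e)\<bar>" using A0 by (simp add: L_def field_simps)
          ultimately have lt: "A/2 * cmod z powr (-\<beta>) > ln (m/e)" by linarith
          have "(m/E) * uf \<alpha> C z \<le> (m/E) * exp (pi - A/2 * cmod z powr (-\<beta>))"
            using ufb[OF z(1)] m0 E0 by (intro mult_left_mono) auto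
          also have "\<dots> = m * exp (- (A/2 * cmod z powr (-\<beta>)))"
          proof -
            have 1: "exp (pi - A/2 * cmod z powr (-\<beta>)) = exp pi / exp (A/2 * cmod z powr (-\<beta>))" by (rule exp_diff)
            have 2: "exp (- (A/2 * cmod z powr (-\<beta>))) = 1 / exp (A/2 * cmod z powr (-\<beta>))"
              by (simp add: exp_minus inverse_eq_divide)
            show ?thesis unfolding 1 2 E_def by simp
          qed
          also have "\<dots> < m * exp (- ln (m/e))" using lt m0 by simp
          also have "\<dots> = e" using m0 e by (simp add: exp_minus)
          finally show ?thesis using uz[OF z(1)] by linarith
        qed
        thus ?thesis using d0 by blast
      next
        case False
        hence w0: "Re w > 0" using wc by simp
        show ?thesis
        proof (cases "uf \<alpha> C w \<le> 0")
          case True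
          have "isCont (uf \<alpha> C) w"
            using uf_cont w0 open_halfspace_Re_gt[of 0] continuous_on_eq_continuous_at by blast
          then obtain d where d: "d > 0" "\<forall>z. dist z w < d \<longrightarrow> dist (uf \<alpha> C z) (uf \<alpha> C w) < e * E / m"
            using e m0 E0 unfolding continuous_at_eps_delta by (metis divide_pos_pos mult_pos_pos)
          have "f z + ((m/E) * uf \<alpha> C z + \<epsilon> * (cmod z^2 - R2)) < e" if z: "z \<in> D" "cmod (z - w) < d" for z
          proof -
            have "uf \<alpha> C z < uf \<alpha> C w + e * E / m" using d z by (auto simp: dist_norm)
            hence "uf \<alpha> C z < e * E / m" using True by linarith
            hence "(m/E) * uf \<alpha> C z < (m/E) * (e * E / m)" using m0 E0 by (intro mult_strict_left_mono) auto
            also have "\<dots> = e" using m0 E0 by simp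
            finally show ?thesis using uz[OF z(1)] by linarith
          qed
          thus ?thesis using d by blast
        next
          case False
          have gw: "goodx \<alpha> C (Re w)" using goodx_mono[OF x1(2) w0 wc(2)] .
          have wc': "Complex (Re w) (Im w) = w" by simp
          have notlat: "C * \<bar>Im w\<bar> powr \<alpha> < Re w"
          proof (rule ccontr)
            assume "\<not> C * \<bar>Im w\<bar> powr \<alpha> < Re w"
            hence "\<not> \<bar>Im w\<bar> < Re w * sgf \<alpha> C (Re w)" using bconv(1)[OF w0, of "\<bar>Im w\<bar>"] by simp
            moreover have "\<bar>Im w\<bar> \<le> Re w * sgf \<alpha> C (Re w)" using bconv(2)[OF w0, of "\<bar>Im w\<bar>"] wc by simp
            moreover have "(1 - (sgf \<alpha> C (Re w))^2) * (Re w * sgf \<alpha> C (Re w)) \<le> Re w * sgf \<alpha> C (Re w)"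
              using sgf_pos[OF w0] w0 by (simp add: mult_left_le_one_le)
            ultimately have "uf \<alpha> C (Complex (Re w) (Im w)) \<le> 0"
              using uf_band[OF w0 gw, of "Im w"] by linarith
            thus False using False wc' by simp
          qed
          hence rw: "Re w = x1" using w(2) wc w0 by (auto simp: D_def)
          have ib: "\<bar>Im w\<bar> \<le> x1 * sgf \<alpha> C x1" using bconv(2)[OF x1(1), of "\<bar>Im w\<bar>"] wc rw by simp
          have "\<bar>Im w\<bar> < (1 - (sgf \<alpha> C x1)^2) * (x1 * sgf \<alpha> C x1)"
          proof (rule ccontr)
            assume "\<not> ?thesis"
            hence "uf \<alpha> C (Complex x1 (Im w)) \<le> 0" using uf_band[OF x1(1) x1(2), of "Im w"] ib by linarith
            thus False using False wc' rw by simp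
          qed
          hence "Complex x1 (Im w) \<in> Good" by (rule cutG)
          hence wG: "w \<in> Good" using wc' rw by simp
          obtain d where d: "d > 0" "ball w d \<subseteq> Good" using oG wG open_contains_ball by blast
          have "f z + ((m/E) * uf \<alpha> C z + \<epsilon> * (cmod z^2 - R2)) < e" if z: "z \<in> D" "cmod (z - w) < d" for z
          proof -
            have "z \<in> Good" using d z by (auto simp: dist_norm norm_minus_commute)
            hence "f z \<le> -m" using fG z(1) by simp
            moreover have "(m/E) * uf \<alpha> C z \<le> (m/E) * E" using ufE[OF z(1)] m0 E0 by (intro mult_left_mono) auto
            moreover have "\<epsilon> * (cmod z^2 - R2) \<le> 0" using R2b[OF z(1)] eps by (simp add: mult_nonneg_nonpos)
            ultimately show ?thesis using E0 e by simp
          qed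
          thus ?thesis using d by blast
        qed
      qed
    qed
  qed
  have "f (of_real t) \<le> -(m/E) * uf \<alpha> C (of_real t) + e" if e: "e > 0" for e
  proof -
    have "f (of_real t) + ((m/E) * uf \<alpha> C (of_real t) + (e/R2) * (cmod (of_real t :: complex)^2 - R2)) \<le> 0"
      using key[of "e/R2"] e R20 by simp
    moreover have "(e/R2) * (cmod (of_real t :: complex)^2 - R2) \<ge> -e" using e R20 by (simp add: field_simps)
    ultimately show ?thesis by simp
  qed
  hence "f (of_real t) \<le> -(m/E) * uf \<alpha> C (of_real t)" by (rule field_le_epsilon)
  also have "\<dots> \<le> -(m/E) * exp (- A * t powr (-\<beta>))"
  proof -
    have "(m/E) * exp (- A * t powr (-\<beta>)) \<le> (m/E) * uf \<alpha> C (of_real t)"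
      using uf_axis[OF t(1)] m0 E0 by (intro mult_left_mono) auto
    thus ?thesis by simp
  qed
  finally show ?thesis by (simp add: E_def)
qed

end

lemma norm_smult_c: "norm (c *s (x :: complex^'n)) = cmod c * norm x"
proof -
  have "norm (c *s x) = L2_set (\<lambda>i. cmod c * cmod (x$i)) UNIV"
    unfolding norm_vec_def by (simp add: norm_mult)
  also have "\<dots> = cmod c * L2_set (\<lambda>i. cmod (x$i)) UNIV"
    by (rule L2_set_right_distrib[symmetric]) simp
  finally show ?thesis by (simp add: norm_vec_def)
qed

lemma Re_cinner_inner: "Re (cinner w v) = inner w (v :: complex^'n)"
  unfolding cinner_def inner_vec_def by (simp add: inner_complex_def)

lemma cinner_self: "cinner v v = of_real ((norm (v :: complex^'n))^2)"
proof -
  have "cinner v v = (\<Sum>k\<in>UNIV. of_real ((cmod (v$k))^2))"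
    unfolding cinner_def by (rule sum.cong[OF refl]) (rule complex_norm_square[symmetric])
  also have "\<dots> = of_real (\<Sum>k\<in>UNIV. (cmod (v$k))^2)" by simp
  also have "(\<Sum>k\<in>UNIV. (cmod (v$k))^2) = (norm v)^2"
    unfolding norm_vec_def L2_set_def by (simp add: sum_nonneg)
  finally show ?thesis .
qed

lemma cinner_smult_left: "cinner (c *s w) v = c * cinner w (v :: complex^'n)"
  unfolding cinner_def by (simp add: sum_distrib_left mult.assoc)

lemma Re_cinner_line: "norm v = 1 \<Longrightarrow> Re (cinner (c *s v) v) = Re c"
  by (simp add: cinner_smult_left cinner_self)

lemma scaleR_as_smult: "(r::real) *\<^sub>R (v :: complex^'n) = (complex_of_real r) *s v"
  unfolding vec_eq_iff vector_scaleR_component vector_smult_component by (simp add: scaleR_conv_of_real)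

lemma proj_line: assumes "norm v = 1" shows "norm (proj_hyp v (c *s v)) = \<bar>Im c\<bar>"
proof -
  have "proj_hyp v (c *s v) = (c - of_real (Re c)) *s v"
    unfolding proj_hyp_def using assms by (simp add: Re_cinner_line scaleR_as_smult vector_sub_rdistrib)
  also have "c - of_real (Re c) = \<i> * of_real (Im c)" by (simp add: complex_eq_iff)
  finally show ?thesis using assms by (simp add: norm_smult_c norm_mult)
qed

lemma proj_add: "proj_hyp v (a + b) = proj_hyp v a + proj_hyp v (b :: complex^'n)"
  unfolding proj_hyp_def Re_cinner_inner by (simp add: inner_add_left scaleR_add_left)

lemma proj_norm_le: assumes "norm (v :: complex^'n) = 1" shows "norm (proj_hyp v w) \<le> norm w"
proof -
  have vv: "inner v v = 1" using assms norm_eq_1 by blast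
  have "(norm (proj_hyp v w))^2 = (norm w)^2 - (inner w v)^2"
    unfolding proj_hyp_def Re_cinner_inner power2_norm_eq_inner
    by (simp add: inner_diff_left inner_diff_right vv inner_commute power2_eq_square algebra_simps)
  hence "(norm (proj_hyp v w))^2 \<le> (norm w)^2" by simp
  thus ?thesis using power2_le_imp_le by fastforce
qed

lemma Re_cinner_add: "Re (cinner (a + b) v) = Re (cinner a v) + Re (cinner b (v :: complex^'n))"
  by (simp add: Re_cinner_inner inner_add_left)

lemma Re_cinner_le: assumes "norm (v :: complex^'n) = 1" shows "\<bar>Re (cinner w v)\<bar> \<le> norm w"
  using Cauchy_Schwarz_ineq2[of w v] assms by (simp add: Re_cinner_inner)

lemma line_disc: "p + a *s v + \<xi> *s ((of_real s) *s v) = p + (a + of_real s * \<xi>) *s (v :: complex^'n)"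
  by (simp add: vec_eq_iff algebra_simps)

lemma line_dist: "norm ((p + a *s v) - (p + b *s v)) = cmod (a - b) * norm (v :: complex^'n)"
proof -
  have "(p + a *s v) - (p + b *s v) = (a - b) *s v" by (simp add: vec_eq_iff algebra_simps)
  thus ?thesis by (simp only: norm_smult_c)
qed

lemma line_real: "p + t *\<^sub>R v = p + (complex_of_real t) *s (v :: complex^'n)"
  by (simp add: scaleR_as_smult)


lemma exists_small:
  fixes P :: "real \<Rightarrow> bool"
  assumes "eventually P (at_right 0)"
  shows "\<exists>t>0. P t"
proof -
  obtain b where "b > 0" "\<forall>y>0. y < b \<longrightarrow> P y" using assms unfolding eventually_at_right_field by auto
  thus ?thesis by (intro exI[of _ "b/2"]) auto
qed

lemma exists_tau:
  fixes C Y X R \<alpha> :: real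
  assumes Y0: "Y \<ge> 0" and a0: "\<alpha> > 0" and CY: "C * Y powr \<alpha> < X" and R0: "R > 0"
  shows "\<exists>\<tau>>0. \<tau> < R \<and> C * (Y + \<tau>) powr \<alpha> + \<tau> < X"
proof -
  have "((\<lambda>\<tau>. C * (Y + \<tau>) powr \<alpha> + \<tau>) \<longlongrightarrow> C * (Y + 0) powr \<alpha> + 0) (at_right 0)"
  proof (intro tendsto_intros)
    show "Y + 0 \<noteq> 0 \<or> 0 < \<alpha> \<and> eventually (\<lambda>x. 0 \<le> Y + x) (at_right (0::real))"
      using a0 Y0 eventually_at_right_less[of "0::real"] by (auto elim: eventually_mono)
  qed
  hence "eventually (\<lambda>\<tau>. C * (Y + \<tau>) powr \<alpha> + \<tau> < X) (at_right 0)"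
    using CY by (intro order_tendstoD(2)) auto
  moreover have "eventually (\<lambda>\<tau>. \<tau> < R) (at_right (0::real))"
    using eventually_at_right_real[OF R0] by (auto elim: eventually_mono)
  ultimately have "eventually (\<lambda>\<tau>. \<tau> < R \<and> C * (Y + \<tau>) powr \<alpha> + \<tau> < X) (at_right 0)"
    by (rule eventually_conj[rotated])
  from exists_small[OF this] show ?thesis by blast
qed

lemma infdist_ge_ball:
  fixes \<Omega> :: "'a::real_normed_vector set"
  assumes "open \<Omega>" "ball z \<tau> \<subseteq> \<Omega>" "frontier \<Omega> \<noteq> {}"
  shows "\<tau> \<le> infdist z (frontier \<Omega>)"
  unfolding infdist_notempty[OF assms(3)]
proof (rule cINF_greatest[OF assms(3)])
  fix a assume "a \<in> frontier \<Omega>"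
  hence "a \<notin> \<Omega>" using assms(1) by (simp add: frontier_def interior_open)
  hence "a \<notin> ball z \<tau>" using assms(2) by blast
  thus "\<tau> \<le> dist z a" by simp
qed

lemma usc_bound:
  fixes \<rho> :: "complex^'n \<Rightarrow> real"
  assumes K: "compact K" "K \<subseteq> \<Omega>" and usc: "usc_on \<Omega> \<rho>" and neg: "\<forall>z\<in>\<Omega>. \<rho> z < 0"
  shows "\<exists>m>0. \<forall>z\<in>K. \<rho> z \<le> -m"
proof (rule ccontr)
  assume "\<not> ?thesis"
  hence "\<forall>n::nat. \<exists>z\<in>K. \<rho> z > -(1 / Suc n)"
    by (metis divide_pos_pos not_le of_nat_0_less_iff zero_less_Suc zero_less_one)
  then obtain zs where zs: "\<And>n. zs n \<in> K" "\<And>n. \<rho> (zs n) > -(1 / Suc n)" by metis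
  obtain w \<sigma> where w: "w \<in> K" "strict_mono \<sigma>" "(zs \<circ> \<sigma>) \<longlonglongrightarrow> w"
    using compact_imp_seq_compact[OF K(1)] zs(1) by (metis seq_compactE)
  have wO: "w \<in> \<Omega>" using w(1) K(2) by blast
  define e where "e = - \<rho> w / 2"
  have e0: "e > 0" using neg wO by (simp add: e_def)
  have "openin (top_of_set \<Omega>) {z\<in>\<Omega>. \<rho> z < \<rho> w + e}" using usc unfolding usc_on_def by blast
  moreover have "w \<in> {z\<in>\<Omega>. \<rho> z < \<rho> w + e}" using wO e0 by simp
  ultimately obtain d where d: "d > 0" "\<forall>x'\<in>\<Omega>. dist x' w < d \<longrightarrow> \<rho> x' < \<rho> w + e"
    unfolding openin_euclidean_subtopology_iff by blast
  have ev1: "eventually (\<lambda>n. dist (zs (\<sigma> n)) w < d) sequentially"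
    using w(3) d(1) unfolding tendsto_iff by auto
  obtain N :: nat where N: "1 / Suc N < e"
    using reals_Archimedean[OF e0] by (metis inverse_eq_divide of_nat_Suc)
  have ev2: "eventually (\<lambda>n. \<rho> (zs (\<sigma> n)) > -e) sequentially"
    unfolding eventually_sequentially
  proof (intro exI allI impI)
    fix n assume "N \<le> n"
    hence "N \<le> \<sigma> n" using seq_suble[OF w(2), of n] by linarith
    hence "1 / real (Suc (\<sigma> n)) \<le> 1 / Suc N" by (simp add: frac_le)
    thus "\<rho> (zs (\<sigma> n)) > -e" using zs(2)[of "\<sigma> n"] N by linarith
  qed
  obtain n where n: "dist (zs (\<sigma> n)) w < d" "\<rho> (zs (\<sigma> n)) > -e"
    using eventually_happens[OF eventually_conj[OF ev1 ev2]] by auto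
  have "\<rho> (zs (\<sigma> n)) < \<rho> w + e" using d(2) n(1) zs(1) K(2) by blast
  thus False using n(2) by (simp add: e_def)
qed

lemma Ktau_compact:
  fixes \<Omega> :: "(complex^'n) set"
  assumes "bounded \<Omega>" "open \<Omega>" "\<tau> > 0" "frontier \<Omega> \<noteq> {}"
  shows "compact {z\<in>\<Omega>. \<tau> \<le> infdist z (frontier \<Omega>)}"
proof -
  have eq: "{z\<in>\<Omega>. \<tau> \<le> infdist z (frontier \<Omega>)} = closure \<Omega> \<inter> {z. \<tau> \<le> infdist z (frontier \<Omega>)}"
  proof
    show "{z\<in>\<Omega>. \<tau> \<le> infdist z (frontier \<Omega>)} \<subseteq> closure \<Omega> \<inter> {z. \<tau> \<le> infdist z (frontier \<Omega>)}"
      using closure_subset by blast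
    show "closure \<Omega> \<inter> {z. \<tau> \<le> infdist z (frontier \<Omega>)} \<subseteq> {z\<in>\<Omega>. \<tau> \<le> infdist z (frontier \<Omega>)}"
    proof clarify
      fix z assume z: "z \<in> closure \<Omega>" "\<tau> \<le> infdist z (frontier \<Omega>)"
      hence "z \<notin> frontier \<Omega>" using assms(3) by auto
      thus "z \<in> \<Omega>" using z(1) assms(2) by (simp add: frontier_def interior_open)
    qed
  qed
  have "closed {z. \<tau> \<le> infdist z (frontier \<Omega>)}"
    by (intro closed_Collect_le continuous_intros)
  hence "closed (closure \<Omega> \<inter> {z. \<tau> \<le> infdist z (frontier \<Omega>)})" by blast
  moreover have "bounded (closure \<Omega> \<inter> {z. \<tau> \<le> infdist z (frontier \<Omega>)})"
    using assms(1) bounded_closure bounded_Int by blast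
  ultimately show ?thesis unfolding eq by (simp add: compact_eq_bounded_closed)
qed

lemma ball_in_cusp:
  fixes p v :: "complex^'n" and \<zeta> :: complex
  assumes nv: "norm v = 1" and sub: "cusp p v C \<alpha> \<inter> ball p r \<subseteq> \<Omega>" and C0: "C > 0" and a0: "\<alpha> > 0"
    and t0: "\<tau> > 0" and c1: "C * (\<bar>Im \<zeta>\<bar> + \<tau>) powr \<alpha> < Re \<zeta> - \<tau>" and c2: "cmod \<zeta> + \<tau> \<le> r"
  shows "ball (p + \<zeta> *s v) \<tau> \<subseteq> \<Omega>"
proof
  fix z' assume "z' \<in> ball (p + \<zeta> *s v) \<tau>"
  define w where "w = z' - (p + \<zeta> *s v)"
  have nw: "norm w < \<tau>" using \<open>z' \<in> ball _ _\<close> by (simp add: w_def dist_norm norm_minus_commute)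
  have zp: "z' - p = \<zeta> *s v + w" by (simp add: w_def)
  have "Re (cinner (z' - p) v) = Re \<zeta> + Re (cinner w v)"
    unfolding zp Re_cinner_add Re_cinner_line[OF nv] ..
  moreover have "\<bar>Re (cinner w v)\<bar> \<le> norm w" by (rule Re_cinner_le[OF nv])
  ultimately have re: "Re (cinner (z' - p) v) > Re \<zeta> - \<tau>" using nw by linarith
  have "norm (proj_hyp v (z' - p)) \<le> norm (proj_hyp v (\<zeta> *s v)) + norm (proj_hyp v w)"
    unfolding zp proj_add by (rule norm_triangle_ineq)
  also have "\<dots> \<le> \<bar>Im \<zeta>\<bar> + norm w" using proj_line[OF nv] proj_norm_le[OF nv] by simp
  finally have pr: "norm (proj_hyp v (z' - p)) \<le> \<bar>Im \<zeta>\<bar> + \<tau>" using nw by linarith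
  have "norm (proj_hyp v (z' - p)) powr \<alpha> \<le> (\<bar>Im \<zeta>\<bar> + \<tau>) powr \<alpha>"
    using pr a0 by (intro powr_mono2) auto
  hence "C * norm (proj_hyp v (z' - p)) powr \<alpha> \<le> C * (\<bar>Im \<zeta>\<bar> + \<tau>) powr \<alpha>" using C0 by simp
  hence "z' \<in> cusp p v C \<alpha>" unfolding cusp_def using c1 re by simp
  moreover have "norm (z' - p) < r"
  proof -
    have "norm (z' - p) \<le> norm (\<zeta> *s v) + norm w" unfolding zp by (rule norm_triangle_ineq)
    also have "norm (\<zeta> *s v) = cmod \<zeta>" using nv by (simp add: norm_smult_c)
    finally show ?thesis using nw c2 by linarith
  qed
  hence "z' \<in> ball p r" by (simp add: dist_norm norm_minus_commute)
  ultimately show "z' \<in> \<Omega>" using sub by blast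
qed


theorem theorem1p1:
  fixes \<Omega> :: "(complex^'n) set" and C \<alpha> r :: real and \<rho> :: "complex^'n \<Rightarrow> real"
  assumes "bounded \<Omega>" and "open \<Omega>" and "connected \<Omega>" and "\<Omega> \<noteq> {}"
    and "C > 0" and "0 < \<alpha>" and "\<alpha> < 1" and "r > 0"
    and "cusp_condition \<Omega> C \<alpha> r"
    and "psh \<Omega> \<rho>" and "\<forall>z\<in>\<Omega>. \<rho> z < 0"
  shows "\<exists>c>0. \<exists>\<delta>0>0. \<forall>z\<in>\<Omega>. infdist z (frontier \<Omega>) < \<delta>0 \<longrightarrow>
           \<rho> z \<le> - c * exp (- (pi * C powr (1/\<alpha>) / (2 * (1/\<alpha> - 1)))
                              / infdist z (frontier \<Omega>) powr (1/\<alpha> - 1))"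
proof -
  note bO = assms(1) and oO = assms(2) and neO = assms(4) and C0 = assms(5) and a0 = assms(6)
    and a1 = assms(7) and r0 = assms(8) and neg = assms(11)
  interpret cs \<alpha> C using assms(5,6,7) by unfold_locales auto
  obtain \<epsilon> where \<epsilon>: "\<epsilon> > 0" "\<forall>z\<in>\<Omega>. infdist z (frontier \<Omega>) < \<epsilon> \<longrightarrow>
        (\<exists>p v. p \<in> frontier \<Omega> \<and> norm v = 1 \<and> (\<exists>t>0. z = p + t *\<^sub>R v) \<and>
               cusp p v C \<alpha> \<inter> ball p r \<subseteq> \<Omega> \<and> norm (z - p) < r / 2)"
    using assms(9) unfolding cusp_condition_def by blast
  have usc: "usc_on \<Omega> \<rho>" using assms(10) unfolding psh_def by blast
  have disc: "\<And>a b. a \<in> \<Omega> \<Longrightarrow> (\<forall>\<zeta>::complex. norm \<zeta> \<le> 1 \<longrightarrow> a + \<zeta> *s b \<in> \<Omega>) \<Longrightarrow>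
        set_integrable lborel {0..2*pi} (\<lambda>\<theta>. \<rho> (a + cis \<theta> *s b)) \<and>
        \<rho> a \<le> (1 / (2*pi)) * (LINT \<theta>:{0..2*pi}|lborel. \<rho> (a + cis \<theta> *s b))"
    using assms(10) unfolding psh_def by blast
  have fne: "frontier \<Omega> \<noteq> {}"
  proof (rule frontier_not_empty[OF neO])
    show "\<Omega> \<noteq> UNIV" using bO not_bounded_UNIV by auto
  qed
  have ev: "eventually (\<lambda>x. goodx \<alpha> C x \<and> x < r/4) (at_right 0)"
  proof -
    have evp: "eventually (\<lambda>x::real. 0 \<le> x) (at_right 0)" "eventually (\<lambda>x::real. 0 \<le> 2*x) (at_right 0)"
      using eventually_at_right_less[of "0::real"] by (auto elim: eventually_mono)
    have t1: "((\<lambda>x::real. x powr \<beta> / Ca) \<longlongrightarrow> 0 powr \<beta> / Ca) (at_right 0)"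
      using b0 evp C0 by (intro tendsto_intros) auto
    have t2: "((\<lambda>x::real. B * (2*x) powr \<beta>) \<longlongrightarrow> B * (2*0) powr \<beta>) (at_right 0)"
      using b0 evp by (intro tendsto_intros) auto
    define \<sigma> where "\<sigma> = min (1/2) (min (1/\<beta>) (min 1 (2*\<alpha>)))"
    have s0: "\<sigma> > 0" using b0 a0 by (simp add: \<sigma>_def)
    have e1: "eventually (\<lambda>x. x powr \<beta> / Ca < \<sigma>) (at_right 0)"
      using order_tendstoD(2)[OF t1] s0 by simp
    have e2: "eventually (\<lambda>x. B * (2*x) powr \<beta> < pi) (at_right 0)"
      using order_tendstoD(2)[OF t2] by simp
    have e3: "eventually (\<lambda>x::real. x > 0 \<and> x < r/4) (at_right 0)"
      using eventually_at_right_real[of 0 "r/4"] r0 by (auto elim: eventually_mono)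
    show ?thesis
    proof (rule eventually_mono[OF eventually_conj[OF e1 eventually_conj[OF e2 e3]]])
      fix x assume x: "x powr \<beta> / Ca < \<sigma> \<and> B * (2*x) powr \<beta> < pi \<and> x > 0 \<and> x < r/4"
      have sg: "sgf \<alpha> C x < \<sigma>" using x sgf_eq[of x] by simp
      have sg0: "sgf \<alpha> C x > 0" using x sgf_pos by simp
      have "\<beta> * sgf \<alpha> C x \<le> \<beta> * (1/\<beta>)" using sg b0 by (intro mult_left_mono) (auto simp: \<sigma>_def)
      hence g2: "\<beta> * sgf \<alpha> C x \<le> 1" using b0 by simp
      have "(sgf \<alpha> C x)^2 \<le> sgf \<alpha> C x * 1" using sg sg0 by (simp add: power2_eq_square \<sigma>_def mult_left_mono)
      also have "\<dots> \<le> 2*\<alpha>" using sg by (simp add: \<sigma>_def)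
      finally have g3: "(sgf \<alpha> C x)^2/(2*\<alpha>) \<le> 1" using a0 by simp
      show "goodx \<alpha> C x \<and> x < r/4" unfolding goodx_def using sg g2 g3 x by (simp add: \<sigma>_def)
    qed
  qed
  obtain x1 where x1: "x1 > 0" "goodx \<alpha> C x1" "x1 < r/4"
    using exists_small[OF ev] by blast
  define sg1 where "sg1 = sgf \<alpha> C x1"
  define Y where "Y = (1 - sg1^2) * (x1 * sg1)"
  have sg10: "sg1 > 0" using sgf_pos[OF x1(1)] by (simp add: sg1_def)
  have sg11: "sg1 \<le> 1/2" using x1(2) by (simp add: goodx_def sg1_def)
  have "sg1^2 \<le> (1/2)^2" using sg10 sg11 by (intro power_mono) auto
  hence sg1sq: "sg1^2 \<le> 1/4" by (simp add: power_divide)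
  have Y0: "Y > 0" using sg1sq sg10 x1(1) by (simp add: Y_def)
  have "Y < x1 * sg1" using sg10 x1(1) by (simp add: Y_def mult_less_cancel_right1 power2_eq_square)
  hence CY: "C * Y powr \<alpha> < x1" using bconv(1)[OF x1(1), of Y] Y0 by (simp add: sg1_def)
  define x1' where "x1' = (x1 + C * Y powr \<alpha>) / 2"
  have x1': "C * Y powr \<alpha> < x1'" "x1' < x1" using CY by (auto simp: x1'_def)
  obtain \<tau> where \<tau>: "\<tau> > 0" "\<tau> < r/4" "C * (Y + \<tau>) powr \<alpha> + \<tau> < x1'"
    using exists_tau[of Y \<alpha> C x1' "r/4"] Y0 a0 x1' r0 by auto
  obtain \<tau>2 where \<tau>2: "\<tau>2 > 0" "\<tau>2 < r/2" "C * (0 + \<tau>2) powr \<alpha> + \<tau>2 < x1"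
    using exists_tau[of 0 \<alpha> C x1 "r/2"] a0 x1 r0 by auto
  define K where "K = {z\<in>\<Omega>. \<tau> \<le> infdist z (frontier \<Omega>)}"
  have cK: "compact K" unfolding K_def by (rule Ktau_compact[OF bO oO \<tau>(1) fne])
  obtain m where m: "m > 0" "\<forall>z\<in>K. \<rho> z \<le> -m"
    using usc_bound[OF cK _ usc neg] by (auto simp: K_def)
  define \<delta>0 where "\<delta>0 = min \<epsilon> \<tau>2"
  define c where "c = m / exp pi"
  show ?thesis
  proof (intro exI conjI allI impI ballI)
    show "c > 0" using m by (simp add: c_def)
    show "\<delta>0 > 0" using \<epsilon> \<tau>2 by (simp add: \<delta>0_def)
    fix z assume zO: "z \<in> \<Omega>" and zd: "infdist z (frontier \<Omega>) < \<delta>0"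
    obtain p v t where pv: "p \<in> frontier \<Omega>" "norm v = 1" "t > 0" "z = p + t *\<^sub>R v"
        "cusp p v C \<alpha> \<inter> ball p r \<subseteq> \<Omega>" "norm (z - p) < r / 2"
      using \<epsilon>(2) zO zd by (auto simp: \<delta>0_def)
    define L where "L \<zeta> = p + \<zeta> *s v" for \<zeta>
    have zL: "z = L (of_real t)" unfolding L_def using pv(4) line_real by simp
    have nzp: "norm (z - p) = t" using pv(2,3,4) by simp
    have tx1: "t < x1"
    proof (rule ccontr)
      assume "\<not> t < x1"
      have "ball (L (of_real t)) \<tau>2 \<subseteq> \<Omega>" unfolding L_def
        by (rule ball_in_cusp[OF pv(2) pv(5) C0 a0 \<tau>2(1)]) (use \<tau>2 \<open>\<not> t < x1\<close> pv(6) nzp in auto)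
      hence "\<tau>2 \<le> infdist z (frontier \<Omega>)" using infdist_ge_ball[OF oO _ fne] zL by blast
      thus False using zd by (simp add: \<delta>0_def)
    qed
    define f where "f \<zeta> = \<rho> (L \<zeta>)" for \<zeta>
    define D where "D = {z. 0 < Re z \<and> Re z < x1 \<and> C * \<bar>Im z\<bar> powr \<alpha> < Re z}"
    have Dp4: "\<And>z. z \<in> D \<Longrightarrow> cmod z \<le> 2 * x1" using D_props(4)[OF x1(1,2)] by (simp add: D_def)
    have LO: "L \<zeta> \<in> \<Omega>" if "\<zeta> \<in> D" for \<zeta>
    proof -
      have "L \<zeta> - p = \<zeta> *s v" by (simp add: L_def)
      hence "L \<zeta> \<in> cusp p v C \<alpha>" using that unfolding cusp_def D_def
        by (simp add: Re_cinner_line[OF pv(2)] proj_line[OF pv(2)])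
      moreover have "dist p (L \<zeta>) < r" using Dp4[OF that] x1(1,3) pv(2) by (simp add: L_def dist_norm norm_smult_c)
      ultimately show ?thesis using pv(5) by auto
    qed
    have "f (of_real t) \<le> -(m / exp pi) * exp (- A * t powr (-\<beta>))"
    proof (rule planar[where ?x1.0 = x1 and ?Good = "{\<zeta>. x1' < Re \<zeta>} \<inter> {\<zeta>. \<bar>Im \<zeta>\<bar> < Y}", folded D_def])
      show "x1 > 0" "goodx \<alpha> C x1" using x1 by auto
      show "m > 0" using m by simp
      show "0 < t" "t < x1" using pv(3) tx1 by auto
      show "open ({\<zeta>. x1' < Re \<zeta>} \<inter> {\<zeta>. \<bar>Im \<zeta>\<bar> < Y})"
        by (intro open_Int open_Collect_less continuous_intros)
      show "Complex x1 y \<in> {\<zeta>. x1' < Re \<zeta>} \<inter> {\<zeta>. \<bar>Im \<zeta>\<bar> < Y}"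
        if "\<bar>y\<bar> < (1 - (sgf \<alpha> C x1)^2) * (x1 * sgf \<alpha> C x1)" for y
        using that x1' by (simp add: Y_def sg1_def)
      show "f z < 0" if "z \<in> D" for z using neg LO[OF that] by (simp add: f_def)
      show "f \<zeta> \<le> -m" if "\<zeta> \<in> D" "\<zeta> \<in> {\<zeta>. x1' < Re \<zeta>} \<inter> {\<zeta>. \<bar>Im \<zeta>\<bar> < Y}" for \<zeta>
      proof -
        have "(\<bar>Im \<zeta>\<bar> + \<tau>) powr \<alpha> \<le> (Y + \<tau>) powr \<alpha>" using that(2) \<tau>(1) a0 by (intro powr_mono2) auto
        hence "C * (\<bar>Im \<zeta>\<bar> + \<tau>) powr \<alpha> \<le> C * (Y + \<tau>) powr \<alpha>" using C0 by simp
        hence c1: "C * (\<bar>Im \<zeta>\<bar> + \<tau>) powr \<alpha> < Re \<zeta> - \<tau>" using \<tau>(3) that(2) by simp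
        have c2: "cmod \<zeta> + \<tau> \<le> r" using Dp4[OF that(1)] x1(1,3) \<tau>(2) by simp
        have "ball (L \<zeta>) \<tau> \<subseteq> \<Omega>" unfolding L_def by (rule ball_in_cusp[OF pv(2) pv(5) C0 a0 \<tau>(1) c1 c2])
        hence "\<tau> \<le> infdist (L \<zeta>) (frontier \<Omega>)" using infdist_ge_ball[OF oO _ fne] by blast
        hence "L \<zeta> \<in> K" using LO[OF that(1)] by (simp add: K_def)
        thus ?thesis using m(2) by (simp add: f_def)
      qed
      show "\<exists>d>0. \<forall>z\<in>D. cmod (z - w) < d \<longrightarrow> f z < f w + e" if w: "w \<in> D" and e: "e > 0" for w e
      proof -
        have "openin (top_of_set \<Omega>) {z\<in>\<Omega>. \<rho> z < \<rho> (L w) + e}" using usc unfolding usc_on_def by blast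
        moreover have "L w \<in> {z\<in>\<Omega>. \<rho> z < \<rho> (L w) + e}" using LO[OF w] e by simp
        ultimately obtain d where d: "d > 0" "\<forall>x'\<in>\<Omega>. dist x' (L w) < d \<longrightarrow> \<rho> x' < \<rho> (L w) + e"
          unfolding openin_euclidean_subtopology_iff by blast
        have "f z < f w + e" if "z \<in> D" "cmod (z - w) < d" for z
        proof -
          have "dist (L z) (L w) = cmod (z - w)" unfolding dist_norm L_def using line_dist[of p z v w] pv(2) by simp
          thus ?thesis using d(2) LO[OF that(1)] that(2) by (simp add: f_def)
        qed
        thus ?thesis using d(1) by blast
      qed
      show "set_integrable lborel {0..2*pi} (\<lambda>\<theta>. f (a + of_real s * cis \<theta>)) \<and>
        f a \<le> (1/(2*pi)) * (LINT \<theta>:{0..2*pi}|lborel. f (a + of_real s * cis \<theta>))"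
        if s: "s > 0" "cball a s \<subseteq> D" for a s
      proof -
        have aD: "a \<in> D" using s by auto
        have ld: "L a + \<xi> *s ((complex_of_real s) *s v) = L (a + of_real s * \<xi>)" for \<xi>
          unfolding L_def by (rule line_disc)
        have "\<forall>\<xi>::complex. norm \<xi> \<le> 1 \<longrightarrow> L a + \<xi> *s ((complex_of_real s) *s v) \<in> \<Omega>"
        proof (intro allI impI)
          fix \<xi> :: complex assume "norm \<xi> \<le> 1"
          hence "cmod (of_real s * \<xi>) \<le> s" using s(1) by (simp add: norm_mult mult_left_le_one_le)
          hence "a + of_real s * \<xi> \<in> cball a s" by (simp add: dist_norm)
          hence "a + of_real s * \<xi> \<in> D" using s(2) by blast
          thus "L a + \<xi> *s ((complex_of_real s) *s v) \<in> \<Omega>" unfolding ld by (rule LO)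
        qed
        from disc[OF LO[OF aD] this] show ?thesis unfolding ld by (simp add: f_def mult.commute)
      qed
    qed
    hence rz: "\<rho> z \<le> -c * exp (- A * t powr (-\<beta>))" using zL by (simp add: f_def c_def)
    define \<delta> where "\<delta> = infdist z (frontier \<Omega>)"
    have zf: "z \<notin> frontier \<Omega>" using zO oO by (simp add: frontier_def interior_open)
    have d0: "\<delta> > 0" unfolding \<delta>_def by (rule infdist_pos_not_in_closed[OF frontier_closed fne zf])
    have dt: "\<delta> \<le> t" unfolding \<delta>_def using infdist_le[OF pv(1), of z] nzp by (simp add: dist_norm)
    have "\<delta> powr \<beta> \<le> t powr \<beta>" using d0 dt b0 by (intro powr_mono2) auto
    hence "A / t powr \<beta> \<le> A / \<delta> powr \<beta>" using A0 d0 pv(3) by (intro divide_left_mono) auto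
    hence "exp (- A / \<delta> powr \<beta>) \<le> exp (- A * t powr (-\<beta>))" by (simp add: powr_minus divide_inverse)
    moreover have "c \<ge> 0" using m by (simp add: c_def)
    ultimately have "c * exp (- A / \<delta> powr \<beta>) \<le> c * exp (- A * t powr (-\<beta>))" by (rule mult_left_mono)
    hence "-c * exp (- A * t powr (-\<beta>)) \<le> -c * exp (- A / \<delta> powr \<beta>)" by simp
    hence "\<rho> z \<le> -c * exp (- A / \<delta> powr \<beta>)" using rz by linarith
    thus "\<rho> z \<le> - c * exp (- (pi * C powr (1/\<alpha>) / (2 * (1/\<alpha> - 1))) / infdist z (frontier \<Omega>) powr (1/\<alpha> - 1))"
      by (simp add: \<delta>_def Acst_def betac_def)
  qed

qed


end
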